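(* Let $\mathscr{V}$ be a braided monoidal category, let $A=(A,\mu_A,\eta_A)$ be a monoid and $B=(B,\mu_B,\eta_B,\delta_B,\varepsilon_B)$ a bimonoid in $\mathscr{V}$, and let $(\gamma,\tau)$ be a twisted right coaction of $B$ on $A$. Define $$z=(\eta_A\otimes 1_B)\bullet\gamma\colon B\otimes A\to A\otimes B,\qquad d=(\eta_A\otimes\delta_B)\bullet\tau\colon B\to A\otimes B\otimes B,\qquad w=\eta_A\circ\varepsilon_B\colon B\to A,$$ where the first dot product is taken in the monoid $A\otimes B$ (with $\eta_A\otimes 1_B\colon B\cong I\otimes B\to A\otimes B$) and the second in the monoid $A\otimes B\otimes B$ (with $B\otimes I\cong B$). Then $(B,d,w,z)$ is a mixed opwreath around the monoid $A$ in $\mathscr{V}$.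
   Context: Associativity and unit constraints of $\mathscr{V}$ are suppressed; $c$ denotes the braiding. For monoids $M,N$, $M\otimes N$ is a monoid with multiplication $(\mu_M\otimes\mu_N)\circ(1_M\otimes c_{N,M}\otimes 1_N)$ and unit $\eta_M\otimes\eta_N$. A bimonoid $B$ is a monoid and comonoid $(B,\delta_B,\varepsilon_B)$ such that $\delta_B\colon B\to B\otimes B$ and $\varepsilon_B\colon B\to I$ are monoid morphisms. For a monoid $M$ and morphisms $u\colon X\to M$, $v\colon Y\to M$, the dot product is $u\bullet v=\mu_M\circ(u\otimes v)\colon X\otimes Y\to M$. A twisted right coaction of the bimonoid $B$ on the monoid $A$ consists of a monoid morphism $\gamma\colon A\to A\otimes B$ and a morphism $\tau\colon I\to A\otimes B\otimes B$ such that: (counitality) $(1_A\otimes\varepsilon_B)\circ\gamma=1_A$; ($\tau$-coassociativity) $\tau\bullet((\gamma\otimes 1_B)\circ\gamma)=((1_A\otimes\delta_B)\circ\gamma)\bullet\tau$ (morphisms $A\to A\otimes B\otimes B$, dot in the monoid $A\otimes B\otimes B$); (2-cocyclicity) $((1_A\otimes\delta_B\otimes 1_B)\circ\tau)\bullet(\tau\otimes\eta_B)=((1_{A\otimes B}\otimes\delta_B)\circ\tau)\bullet((\gamma\otimes 1_{B\otimes B})\circ\tau)$ (morphisms $I\to A\otimes B^{\otimes 3}$, dot in $A\otimes B^{\otimes 3}$); (normality) $(1_{A\otimes B}\otimes\varepsilon_B)\circ\tau=\eta_A\otimes\eta_B=(1_A\otimes\varepsilon_B\otimes 1_B)\circ\tau$.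 ($\tau$ is not required to be $\bullet$-invertible.) A mixed opwreath around a monoid $A=(A,m,j)$ in $\mathscr{V}$ is a quadruple $(C,d,w,z)$ of an object $C$ and morphisms $d\colon C\to A\otimes C\otimes C$, $w\colon C\to A$, $z\colon C\otimes A\to A\otimes C$ satisfying: (1) $z\circ(1_C\otimes m)=(m\otimes 1_C)\circ(1_A\otimes z)\circ(z\otimes 1_A)$; (2) $z\circ(1_C\otimes j)=j\otimes 1_C$; (3) $m\circ(w\otimes 1_A)=m\circ(1_A\otimes w)\circ z$; (4) $(m\otimes 1_{C\otimes C})\circ(1_A\otimes z\otimes 1_C)\circ(1_{A\otimes C}\otimes z)\circ(d\otimes 1_A)=(m\otimes 1_{C\otimes C})\circ(1_A\otimes d)\circ z$; (5) $(m\otimes 1_{C^{\otimes 3}})\circ(1_A\otimes d\otimes 1_C)\circ d=(m\otimes 1_{C^{\otimes 3}})\circ(1_A\otimes z\otimes 1_{C\otimes C})\circ(1_{A\otimes C}\otimes d)\circ d$; (6) $(m\otimes 1_C)\circ(1_A\otimes w\otimes 1_C)\circ d=j\otimes 1_C$; (7) $(m\otimes 1_C)\circ(1_A\otimes z)\circ(1_{A\otimes C}\otimes w)\circ d=j\otimes 1_C$. *)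

theory Defs
  imports Main
begin

text \<open>A strict braided monoidal category (associativity and unit constraints
suppressed, as in the paper).  Objects of type 'o, morphisms of type 'm.\<close>

record ('o, 'm) bmcat =
  ob    :: "'o set"
  hom   :: "'o \<Rightarrow> 'o \<Rightarrow> 'm set"
  cmp   :: "'m \<Rightarrow> 'm \<Rightarrow> 'm"      (* cmp g f = g \<circ> f *)
  ident :: "'o \<Rightarrow> 'm"
  tob   :: "'o \<Rightarrow> 'o \<Rightarrow> 'o"
  tar   :: "'m \<Rightarrow> 'm \<Rightarrow> 'm"
  unitob :: "'o"
  br    :: "'o \<Rightarrow> 'o \<Rightarrow> 'm"

definition braided_moncat :: "('o, 'm, 'x) bmcat_scheme \<Rightarrow> bool" where
  "braided_moncat V \<longleftrightarrow>
     (\<comment> \<open>category\<close>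
      (\<forall>X\<in>ob V. \<forall>Y\<in>ob V. \<forall>Z\<in>ob V. \<forall>f\<in>hom V X Y. \<forall>g\<in>hom V Y Z.
          cmp V g f \<in> hom V X Z) \<and>
      (\<forall>W\<in>ob V. \<forall>X\<in>ob V. \<forall>Y\<in>ob V. \<forall>Z\<in>ob V.
          \<forall>f\<in>hom V W X. \<forall>g\<in>hom V X Y. \<forall>h\<in>hom V Y Z.
          cmp V h (cmp V g f) = cmp V (cmp V h g) f) \<and>
      (\<forall>X\<in>ob V. ident V X \<in> hom V X X) \<and>
      (\<forall>X\<in>ob V. \<forall>Y\<in>ob V. \<forall>f\<in>hom V X Y.
          cmp V (ident V Y) f = f \<and> cmp V f (ident V X) = f) \<and>
      \<comment> \<open>strict monoidal structure\<close>
      unitob V \<in> ob V \<and>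
      (\<forall>X\<in>ob V. \<forall>Y\<in>ob V. tob V X Y \<in> ob V) \<and>
      (\<forall>X\<in>ob V. \<forall>Y\<in>ob V. \<forall>Z\<in>ob V. tob V (tob V X Y) Z = tob V X (tob V Y Z)) \<and>
      (\<forall>X\<in>ob V. tob V (unitob V) X = X \<and> tob V X (unitob V) = X) \<and>
      (\<forall>X\<in>ob V. \<forall>X'\<in>ob V. \<forall>Y\<in>ob V. \<forall>Y'\<in>ob V. \<forall>f\<in>hom V X X'. \<forall>g\<in>hom V Y Y'.
          tar V f g \<in> hom V (tob V X Y) (tob V X' Y')) \<and>
      (\<forall>X\<in>ob V. \<forall>X'\<in>ob V. \<forall>Y\<in>ob V. \<forall>Y'\<in>ob V. \<forall>Z\<in>ob V. \<forall>Z'\<in>ob V.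
          \<forall>f\<in>hom V X X'. \<forall>g\<in>hom V Y Y'. \<forall>h\<in>hom V Z Z'.
          tar V (tar V f g) h = tar V f (tar V g h)) \<and>
      (\<forall>X\<in>ob V. \<forall>Y\<in>ob V. \<forall>f\<in>hom V X Y.
          tar V (ident V (unitob V)) f = f \<and> tar V f (ident V (unitob V)) = f) \<and>
      (\<forall>X\<in>ob V. \<forall>Y\<in>ob V. tar V (ident V X) (ident V Y) = ident V (tob V X Y)) \<and>
      (\<forall>X\<in>ob V. \<forall>Y\<in>ob V. \<forall>Z\<in>ob V. \<forall>X'\<in>ob V. \<forall>Y'\<in>ob V. \<forall>Z'\<in>ob V.
          \<forall>f\<in>hom V X Y. \<forall>g\<in>hom V Y Z. \<forall>f'\<in>hom V X' Y'. \<forall>g'\<in>hom V Y' Z'.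
          tar V (cmp V g f) (cmp V g' f') = cmp V (tar V g g') (tar V f f')) \<and>
      \<comment> \<open>braiding: natural isomorphism satisfying the (strict) hexagon axioms\<close>
      (\<forall>X\<in>ob V. \<forall>Y\<in>ob V. br V X Y \<in> hom V (tob V X Y) (tob V Y X)) \<and>
      (\<forall>X\<in>ob V. \<forall>Y\<in>ob V. \<exists>g\<in>hom V (tob V Y X) (tob V X Y).
          cmp V g (br V X Y) = ident V (tob V X Y) \<and>
          cmp V (br V X Y) g = ident V (tob V Y X)) \<and>
      (\<forall>X\<in>ob V. \<forall>X'\<in>ob V. \<forall>Y\<in>ob V. \<forall>Y'\<in>ob V. \<forall>f\<in>hom V X X'. \<forall>g\<in>hom V Y Y'.
          cmp V (br V X' Y') (tar V f g) = cmp V (tar V g f) (br V X Y)) \<and>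
      (\<forall>X\<in>ob V. \<forall>Y\<in>ob V. \<forall>Z\<in>ob V.
          br V X (tob V Y Z) = cmp V (tar V (ident V Y) (br V X Z)) (tar V (br V X Y) (ident V Z))) \<and>
      (\<forall>X\<in>ob V. \<forall>Y\<in>ob V. \<forall>Z\<in>ob V.
          br V (tob V X Y) Z = cmp V (tar V (br V X Z) (ident V Y)) (tar V (ident V X) (br V Y Z))))"

definition is_monoid :: "('o, 'm, 'x) bmcat_scheme \<Rightarrow> 'o \<Rightarrow> 'm \<Rightarrow> 'm \<Rightarrow> bool" where
  "is_monoid V M mu eta \<longleftrightarrow>
     M \<in> ob V \<and> mu \<in> hom V (tob V M M) M \<and> eta \<in> hom V (unitob V) M \<and>
     cmp V mu (tar V mu (ident V M)) = cmp V mu (tar V (ident V M) mu) \<and>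
     cmp V mu (tar V eta (ident V M)) = ident V M \<and>
     cmp V mu (tar V (ident V M) eta) = ident V M"

definition is_comonoid :: "('o, 'm, 'x) bmcat_scheme \<Rightarrow> 'o \<Rightarrow> 'm \<Rightarrow> 'm \<Rightarrow> bool" where
  "is_comonoid V C dl ep \<longleftrightarrow>
     C \<in> ob V \<and> dl \<in> hom V C (tob V C C) \<and> ep \<in> hom V C (unitob V) \<and>
     cmp V (tar V dl (ident V C)) dl = cmp V (tar V (ident V C) dl) dl \<and>
     cmp V (tar V ep (ident V C)) dl = ident V C \<and>
     cmp V (tar V (ident V C) ep) dl = ident V C"

text \<open>Multiplication of the tensor product monoid M \<otimes> N:
  (mu_M \<otimes> mu_N) \<circ> (1_M \<otimes> c_{N,M} \<otimes> 1_N); its unit is eta_M \<otimes> eta_N.\<close>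

definition tmult :: "('o, 'm, 'x) bmcat_scheme \<Rightarrow> 'o \<Rightarrow> 'm \<Rightarrow> 'o \<Rightarrow> 'm \<Rightarrow> 'm" where
  "tmult V M muM N muN =
     cmp V (tar V muM muN) (tar V (tar V (ident V M) (br V N M)) (ident V N))"

definition monoid_hom ::
  "('o, 'm, 'x) bmcat_scheme \<Rightarrow> 'o \<Rightarrow> 'm \<Rightarrow> 'm \<Rightarrow> 'o \<Rightarrow> 'm \<Rightarrow> 'm \<Rightarrow> 'm \<Rightarrow> bool" where
  "monoid_hom V M muM etaM N muN etaN f \<longleftrightarrow>
     f \<in> hom V M N \<and>
     cmp V f muM = cmp V muN (tar V f f) \<and>
     cmp V f etaM = etaN"

definition is_bimonoid ::
  "('o, 'm, 'x) bmcat_scheme \<Rightarrow> 'o \<Rightarrow> 'm \<Rightarrow> 'm \<Rightarrow> 'm \<Rightarrow> 'm \<Rightarrow> bool" where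
  "is_bimonoid V B mu eta dl ep \<longleftrightarrow>
     is_monoid V B mu eta \<and> is_comonoid V B dl ep \<and>
     monoid_hom V B mu eta (tob V B B) (tmult V B mu B mu) (tar V eta eta) dl \<and>
     monoid_hom V B mu eta (unitob V) (ident V (unitob V)) (ident V (unitob V)) ep"

definition dotp :: "('o, 'm, 'x) bmcat_scheme \<Rightarrow> 'm \<Rightarrow> 'm \<Rightarrow> 'm \<Rightarrow> 'm" where
  "dotp V muM u v = cmp V muM (tar V u v)"

text \<open>The monoid A \<otimes> B \<otimes> B is ((A \<otimes> B) \<otimes> B), and A \<otimes> B^3 is (((A \<otimes> B) \<otimes> B) \<otimes> B).\<close>

definition twisted_coaction ::
  "('o, 'm, 'x) bmcat_scheme \<Rightarrow> 'o \<Rightarrow> 'm \<Rightarrow> 'm \<Rightarrow> 'o \<Rightarrow> 'm \<Rightarrow> 'm \<Rightarrow> 'm \<Rightarrow> 'm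
     \<Rightarrow> 'm \<Rightarrow> 'm \<Rightarrow> bool" where
  "twisted_coaction V A muA etaA B muB etaB dl ep gam tau \<longleftrightarrow>
     (let AB = tob V A B; muAB = tmult V A muA B muB;
          ABB = tob V AB B; muABB = tmult V AB muAB B muB;
          muABBB = tmult V ABB muABB B muB;
          iA = ident V A; iB = ident V B in
     monoid_hom V A muA etaA AB muAB (tar V etaA etaB) gam \<and>
     tau \<in> hom V (unitob V) ABB \<and>
     cmp V (tar V iA ep) gam = iA \<and>
     dotp V muABB tau (cmp V (tar V gam iB) gam) =
       dotp V muABB (cmp V (tar V iA dl) gam) tau \<and>
     dotp V muABBB (cmp V (tar V (tar V iA dl) iB) tau) (tar V tau etaB) =
       dotp V muABBB (cmp V (tar V (ident V AB) dl) tau)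
                     (cmp V (tar V gam (ident V (tob V B B))) tau) \<and>
     cmp V (tar V (ident V AB) ep) tau = tar V etaA etaB \<and>
     cmp V (tar V (tar V iA ep) iB) tau = tar V etaA etaB)"

definition mixed_opwreath ::
  "('o, 'm, 'x) bmcat_scheme \<Rightarrow> 'o \<Rightarrow> 'm \<Rightarrow> 'm \<Rightarrow> 'o \<Rightarrow> 'm \<Rightarrow> 'm \<Rightarrow> 'm \<Rightarrow> bool" where
  "mixed_opwreath V A m j C d w z \<longleftrightarrow>
     (let iA = ident V A; iC = ident V C; iCC = ident V (tob V C C);
          iCCC = ident V (tob V C (tob V C C)) in
     C \<in> ob V \<and>
     d \<in> hom V C (tob V A (tob V C C)) \<and>
     w \<in> hom V C A \<and>
     z \<in> hom V (tob V C A) (tob V A C) \<and>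
     \<comment> \<open>(1)\<close>
     cmp V z (tar V iC m) = cmp V (tar V m iC) (cmp V (tar V iA z) (tar V z iA)) \<and>
     \<comment> \<open>(2)\<close>
     cmp V z (tar V iC j) = tar V j iC \<and>
     \<comment> \<open>(3)\<close>
     cmp V m (tar V w iA) = cmp V m (cmp V (tar V iA w) z) \<and>
     \<comment> \<open>(4)\<close>
     cmp V (tar V m iCC) (cmp V (tar V (tar V iA z) iC)
        (cmp V (tar V (tar V iA iC) z) (tar V d iA))) =
       cmp V (tar V m iCC) (cmp V (tar V iA d) z) \<and>
     \<comment> \<open>(5)\<close>
     cmp V (tar V m iCCC) (cmp V (tar V (tar V iA d) iC) d) =
       cmp V (tar V m iCCC) (cmp V (tar V (tar V iA z) iCC) (cmp V (tar V (tar V iA iC) d) d)) \<and>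
     \<comment> \<open>(6)\<close>
     cmp V (tar V m iC) (cmp V (tar V (tar V iA w) iC) d) = tar V j iC \<and>
     \<comment> \<open>(7)\<close>
     cmp V (tar V m iC) (cmp V (tar V iA z) (cmp V (tar V (tar V iA iC) w) d)) = tar V j iC)"

end

theory Submission
  imports Defs
begin


locale bmc = fixes V :: "('o,'m,'x) bmcat_scheme" assumes BM: "braided_moncat V"
begin

abbreviation cm (infixr "\<cdot>" 55) where "g \<cdot> f \<equiv> cmp V g f"
abbreviation tr (infixr "\<otimes>" 60) where "f \<otimes> g \<equiv> tar V f g"
abbreviation tb (infixr "\<boxtimes>" 60) where "X \<boxtimes> Y \<equiv> tob V X Y"
abbreviation "I \<equiv> unitob V"
abbreviation "idm \<equiv> ident V"
abbreviation "c \<equiv> br V"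

lemmas BM0 = BM[unfolded braided_moncat_def, THEN conjunct1]
lemmas BM1 = BM[unfolded braided_moncat_def, THEN conjunct2, THEN conjunct1]
lemmas BM2 = BM[unfolded braided_moncat_def, THEN conjunct2, THEN conjunct2, THEN conjunct1]
lemmas BM3 = BM[unfolded braided_moncat_def, THEN conjunct2, THEN conjunct2, THEN conjunct2, THEN conjunct1]
lemmas BM4 = BM[unfolded braided_moncat_def, THEN conjunct2, THEN conjunct2, THEN conjunct2, THEN conjunct2, THEN conjunct1]
lemmas BM5 = BM[unfolded braided_moncat_def, THEN conjunct2, THEN conjunct2, THEN conjunct2, THEN conjunct2, THEN conjunct2, THEN conjunct1]
lemmas BM6 = BM[unfolded braided_moncat_def, THEN conjunct2, THEN conjunct2, THEN conjunct2, THEN conjunct2, THEN conjunct2, THEN conjunct2, THEN conjunct1]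
lemmas BM7 = BM[unfolded braided_moncat_def, THEN conjunct2, THEN conjunct2, THEN conjunct2, THEN conjunct2, THEN conjunct2, THEN conjunct2, THEN conjunct2, THEN conjunct1]
lemmas BM8 = BM[unfolded braided_moncat_def, THEN conjunct2, THEN conjunct2, THEN conjunct2, THEN conjunct2, THEN conjunct2, THEN conjunct2, THEN conjunct2, THEN conjunct2, THEN conjunct1]
lemmas BM9 = BM[unfolded braided_moncat_def, THEN conjunct2, THEN conjunct2, THEN conjunct2, THEN conjunct2, THEN conjunct2, THEN conjunct2, THEN conjunct2, THEN conjunct2, THEN conjunct2, THEN conjunct1]
lemmas BM10 = BM[unfolded braided_moncat_def, THEN conjunct2, THEN conjunct2, THEN conjunct2, THEN conjunct2, THEN conjunct2, THEN conjunct2, THEN conjunct2, THEN conjunct2, THEN conjunct2, THEN conjunct2, THEN conjunct1]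
lemmas BM11 = BM[unfolded braided_moncat_def, THEN conjunct2, THEN conjunct2, THEN conjunct2, THEN conjunct2, THEN conjunct2, THEN conjunct2, THEN conjunct2, THEN conjunct2, THEN conjunct2, THEN conjunct2, THEN conjunct2, THEN conjunct1]
lemmas BM12 = BM[unfolded braided_moncat_def, THEN conjunct2, THEN conjunct2, THEN conjunct2, THEN conjunct2, THEN conjunct2, THEN conjunct2, THEN conjunct2, THEN conjunct2, THEN conjunct2, THEN conjunct2, THEN conjunct2, THEN conjunct2, THEN conjunct1]
lemmas BM13 = BM[unfolded braided_moncat_def, THEN conjunct2, THEN conjunct2, THEN conjunct2, THEN conjunct2, THEN conjunct2, THEN conjunct2, THEN conjunct2, THEN conjunct2, THEN conjunct2, THEN conjunct2, THEN conjunct2, THEN conjunct2, THEN conjunct2, THEN conjunct1]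
lemmas BM14 = BM[unfolded braided_moncat_def, THEN conjunct2, THEN conjunct2, THEN conjunct2, THEN conjunct2, THEN conjunct2, THEN conjunct2, THEN conjunct2, THEN conjunct2, THEN conjunct2, THEN conjunct2, THEN conjunct2, THEN conjunct2, THEN conjunct2, THEN conjunct2, THEN conjunct1]
lemmas BM15 = BM[unfolded braided_moncat_def, THEN conjunct2, THEN conjunct2, THEN conjunct2, THEN conjunct2, THEN conjunct2, THEN conjunct2, THEN conjunct2, THEN conjunct2, THEN conjunct2, THEN conjunct2, THEN conjunct2, THEN conjunct2, THEN conjunct2, THEN conjunct2, THEN conjunct2, THEN conjunct1]
lemmas BM16 = BM[unfolded braided_moncat_def, THEN conjunct2, THEN conjunct2, THEN conjunct2, THEN conjunct2, THEN conjunct2, THEN conjunct2, THEN conjunct2, THEN conjunct2, THEN conjunct2, THEN conjunct2, THEN conjunct2, THEN conjunct2, THEN conjunct2, THEN conjunct2, THEN conjunct2, THEN conjunct2, THEN conjunct1]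
lemmas BM17 = BM[unfolded braided_moncat_def, THEN conjunct2, THEN conjunct2, THEN conjunct2, THEN conjunct2, THEN conjunct2, THEN conjunct2, THEN conjunct2, THEN conjunct2, THEN conjunct2, THEN conjunct2, THEN conjunct2, THEN conjunct2, THEN conjunct2, THEN conjunct2, THEN conjunct2, THEN conjunct2, THEN conjunct2]

definition arr where "arr f X Y \<longleftrightarrow> X \<in> ob V \<and> Y \<in> ob V \<and> f \<in> hom V X Y"

lemma ob_I[simp]: "I \<in> ob V" using BM4 unfolding arr_def by blast
lemma ob_tob[simp]: "X \<in> ob V \<Longrightarrow> Y \<in> ob V \<Longrightarrow> X \<boxtimes> Y \<in> ob V"
  using BM5 unfolding arr_def by blast
lemma tob_assoc[simp]: "X \<in> ob V \<Longrightarrow> Y \<in> ob V \<Longrightarrow> Z \<in> ob V \<Longrightarrow> (X \<boxtimes> Y) \<boxtimes> Z = X \<boxtimes> (Y \<boxtimes> Z)"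
  using BM6 unfolding arr_def by blast
lemma tob_IL[simp]: "X \<in> ob V \<Longrightarrow> I \<boxtimes> X = X"
  using BM7 unfolding arr_def by blast
lemma tob_IR[simp]: "X \<in> ob V \<Longrightarrow> X \<boxtimes> I = X"
  using BM7 unfolding arr_def by blast

lemma arrD: "arr f X Y \<Longrightarrow> X \<in> ob V" "arr f X Y \<Longrightarrow> Y \<in> ob V" "arr f X Y \<Longrightarrow> f \<in> hom V X Y"
  by (auto simp: arr_def)

lemma arr_cmp: "arr f X Y \<Longrightarrow> arr g Y Z \<Longrightarrow> arr (g \<cdot> f) X Z"
  using BM0 unfolding arr_def by blast
lemma arr_id: "X \<in> ob V \<Longrightarrow> arr (idm X) X X"
  using BM2 unfolding arr_def by blast
lemma arr_tar: "arr f X X' \<Longrightarrow> arr g Y Y' \<Longrightarrow> arr (f \<otimes> g) (X \<boxtimes> Y) (X' \<boxtimes> Y')"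
  using BM8 unfolding arr_def by (meson ob_tob)
lemma arr_br: "X \<in> ob V \<Longrightarrow> Y \<in> ob V \<Longrightarrow> arr (c X Y) (X \<boxtimes> Y) (Y \<boxtimes> X)"
  using BM13 unfolding arr_def by (meson ob_tob)

lemma arr_tar': "arr f X X' \<Longrightarrow> arr g Y Y' \<Longrightarrow> P = X \<boxtimes> Y \<Longrightarrow> Q = X' \<boxtimes> Y' \<Longrightarrow> arr (f \<otimes> g) P Q"
  using arr_tar by simp
lemma arr_id': "X \<in> ob V \<Longrightarrow> P = X \<Longrightarrow> Q = X \<Longrightarrow> arr (idm X) P Q"
  using arr_id by simp
lemma arr_br': "X \<in> ob V \<Longrightarrow> Y \<in> ob V \<Longrightarrow> P = X \<boxtimes> Y \<Longrightarrow> Q = Y \<boxtimes> X \<Longrightarrow> arr (c X Y) P Q"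
  using arr_br by simp

lemma cmp_assoc: "arr f W X \<Longrightarrow> arr g X Y \<Longrightarrow> arr h Y Z \<Longrightarrow> h \<cdot> (g \<cdot> f) = (h \<cdot> g) \<cdot> f"
  using BM1 unfolding arr_def by blast
lemma id_left: "arr f X Y \<Longrightarrow> idm Y \<cdot> f = f"
  using BM3 unfolding arr_def by blast
lemma id_right: "arr f X Y \<Longrightarrow> f \<cdot> idm X = f"
  using BM3 unfolding arr_def by blast
lemma tar_assoc: "arr f X X' \<Longrightarrow> arr g Y Y' \<Longrightarrow> arr h Z Z' \<Longrightarrow> (f \<otimes> g) \<otimes> h = f \<otimes> (g \<otimes> h)"
  using BM9 unfolding arr_def by blast
lemma tar_IL: "arr f X Y \<Longrightarrow> idm I \<otimes> f = f"
  using BM10 unfolding arr_def by blast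
lemma tar_IR: "arr f X Y \<Longrightarrow> f \<otimes> idm I = f"
  using BM10 unfolding arr_def by blast
lemma tar_id: "X \<in> ob V \<Longrightarrow> Y \<in> ob V \<Longrightarrow> idm X \<otimes> idm Y = idm (X \<boxtimes> Y)"
  using BM11 unfolding arr_def by blast
lemma interchange: "arr f X Y \<Longrightarrow> arr g Y Z \<Longrightarrow> arr f' X' Y' \<Longrightarrow> arr g' Y' Z' \<Longrightarrow>
   (g \<cdot> f) \<otimes> (g' \<cdot> f') = (g \<otimes> g') \<cdot> (f \<otimes> f')"
  using BM12 unfolding arr_def by blast
lemma br_nat: "arr f X X' \<Longrightarrow> arr g Y Y' \<Longrightarrow> c X' Y' \<cdot> (f \<otimes> g) = (g \<otimes> f) \<cdot> c X Y"
  using BM15 unfolding arr_def by blast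
lemma hex1: "X \<in> ob V \<Longrightarrow> Y \<in> ob V \<Longrightarrow> Z \<in> ob V \<Longrightarrow> c X (Y \<boxtimes> Z) = (idm Y \<otimes> c X Z) \<cdot> (c X Y \<otimes> idm Z)"
  using BM16 unfolding arr_def by blast
lemma hex2: "X \<in> ob V \<Longrightarrow> Y \<in> ob V \<Longrightarrow> Z \<in> ob V \<Longrightarrow> c (X \<boxtimes> Y) Z = (c X Z \<otimes> idm Y) \<cdot> (idm X \<otimes> c Y Z)"
  using BM17 unfolding arr_def by blast
lemma br_iso: "X \<in> ob V \<Longrightarrow> Y \<in> ob V \<Longrightarrow> \<exists>g. arr g (Y \<boxtimes> X) (X \<boxtimes> Y) \<and> g \<cdot> c X Y = idm (X \<boxtimes> Y) \<and> c X Y \<cdot> g = idm (Y \<boxtimes> X)"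
  using BM14 unfolding arr_def by (meson ob_tob)

lemmas arr_rules = arr_cmp arr_tar' arr_id' arr_br'

end


context bmc begin

lemma idem_iso: assumes "arr e X X" "arr g X X" "e \<cdot> e = e" "g \<cdot> e = idm X"
  shows "e = idm X"
proof -
  have "idm X = g \<cdot> (e \<cdot> e)" using assms by simp
  also have "\<dots> = (g \<cdot> e) \<cdot> e" by (rule cmp_assoc) (use assms in auto)
  also have "\<dots> = e" using assms id_left by simp
  finally show ?thesis by simp
qed

lemma br_XI: assumes X: "X \<in> ob V" shows "c X I = idm X"
proof -
  have a: "arr (c X I) X X" using arr_br[of X I] X by simp
  have "c X (I \<boxtimes> I) = (idm I \<otimes> c X I) \<cdot> (c X I \<otimes> idm I)" by (rule hex1) (simp_all add: X)
  hence e: "c X I = c X I \<cdot> c X I" using a tar_IL[OF a] tar_IR[OF a] by simp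
  obtain g where g: "arr g (I \<boxtimes> X) (X \<boxtimes> I)" "g \<cdot> c X I = idm (X \<boxtimes> I)"
    using br_iso[of X I] X by auto
  show ?thesis by (rule idem_iso[OF a _ e[symmetric]]) (use g X in auto)
qed

lemma br_IX: assumes X: "X \<in> ob V" shows "c I X = idm X"
proof -
  have a: "arr (c I X) X X" using arr_br[of I X] X by simp
  have "c (I \<boxtimes> I) X = (c I X \<otimes> idm I) \<cdot> (idm I \<otimes> c I X)" by (rule hex2) (simp_all add: X)
  hence e: "c I X = c I X \<cdot> c I X" using a tar_IL[OF a] tar_IR[OF a] by simp
  obtain g where g: "arr g (X \<boxtimes> I) (I \<boxtimes> X)" "g \<cdot> c I X = idm (I \<boxtimes> X)"
    using br_iso[of I X] X by auto
  show ?thesis by (rule idem_iso[OF a _ e[symmetric]]) (use g X in auto)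
qed

lemma mon: assumes "is_monoid V M mu eta"
  shows mon_ob: "M \<in> ob V" and mon_mu: "arr mu (M \<boxtimes> M) M" and mon_eta: "arr eta I M"
  and mon_assoc: "mu \<cdot> (mu \<otimes> idm M) = mu \<cdot> (idm M \<otimes> mu)"
  and mon_uL: "mu \<cdot> (eta \<otimes> idm M) = idm M"
  and mon_uR: "mu \<cdot> (idm M \<otimes> eta) = idm M"
  using assms unfolding is_monoid_def arr_def by auto

lemma dot_pre:
  assumes "arr u X M" "arr v Y M" "arr mu (M \<boxtimes> M) M" "arr f X' X" "arr g Y' Y"
  shows "dotp V mu u v \<cdot> (f \<otimes> g) = dotp V mu (u \<cdot> f) (v \<cdot> g)"
proof -
  have "dotp V mu u v \<cdot> (f \<otimes> g) = mu \<cdot> ((u \<otimes> v) \<cdot> (f \<otimes> g))" unfolding dotp_def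
    by (rule cmp_assoc[symmetric]) (rule arr_rules assms | simp)+
  also have "(u \<otimes> v) \<cdot> (f \<otimes> g) = (u \<cdot> f) \<otimes> (v \<cdot> g)"
    by (rule interchange[symmetric]) (rule arr_rules assms | simp)+
  finally show ?thesis unfolding dotp_def .
qed

lemma dot_arr: "arr u X M \<Longrightarrow> arr v Y M \<Longrightarrow> arr mu (M \<boxtimes> M) M \<Longrightarrow> P = X \<boxtimes> Y \<Longrightarrow> arr (dotp V mu u v) P M"
  unfolding dotp_def by (rule arr_rules | simp)+

lemma dot_assoc:
  assumes M: "is_monoid V M mu eta" and a: "arr u X M" "arr v Y M" "arr w Z M"
  shows "dotp V mu (dotp V mu u v) w = dotp V mu u (dotp V mu v w)"
proof -
  note m = mon[OF M]
  have "dotp V mu (dotp V mu u v) w = mu \<cdot> ((mu \<cdot> (u \<otimes> v)) \<otimes> (idm M \<cdot> w))"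
    unfolding dotp_def using id_left[OF a(3)] by simp
  also have "(mu \<cdot> (u \<otimes> v)) \<otimes> (idm M \<cdot> w) = (mu \<otimes> idm M) \<cdot> ((u \<otimes> v) \<otimes> w)"
    by (rule interchange) (rule arr_rules a m | simp)+
  also have "mu \<cdot> ((mu \<otimes> idm M) \<cdot> ((u \<otimes> v) \<otimes> w)) = (mu \<cdot> (mu \<otimes> idm M)) \<cdot> ((u \<otimes> v) \<otimes> w)"
    by (rule cmp_assoc) (rule arr_rules a m | simp)+
  also have "(u \<otimes> v) \<otimes> w = u \<otimes> (v \<otimes> w)" by (rule tar_assoc) (rule a)+
  also have "mu \<cdot> (mu \<otimes> idm M) = mu \<cdot> (idm M \<otimes> mu)" by (rule m)
  also have "(mu \<cdot> (idm M \<otimes> mu)) \<cdot> (u \<otimes> (v \<otimes> w)) = mu \<cdot> ((idm M \<otimes> mu) \<cdot> (u \<otimes> (v \<otimes> w)))"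
    by (rule cmp_assoc[symmetric]) (rule arr_rules a m | simp)+
  also have "(idm M \<otimes> mu) \<cdot> (u \<otimes> (v \<otimes> w)) = (idm M \<cdot> u) \<otimes> (mu \<cdot> (v \<otimes> w))"
    by (rule interchange[symmetric]) (rule arr_rules a m | simp)+
  also have "idm M \<cdot> u = u" by (rule id_left[OF a(1)])
  finally show ?thesis unfolding dotp_def .
qed

lemma dot_uL:
  assumes M: "is_monoid V M mu eta" and a: "arr u X M"
  shows "dotp V mu eta u = u"
proof -
  note m = mon[OF M]
  have "dotp V mu eta u = mu \<cdot> ((eta \<cdot> idm I) \<otimes> (idm M \<cdot> u))"
    unfolding dotp_def using id_left[OF a] id_right[OF m(3)] by simp
  also have "(eta \<cdot> idm I) \<otimes> (idm M \<cdot> u) = (eta \<otimes> idm M) \<cdot> (idm I \<otimes> u)"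
    by (rule interchange) (rule arr_rules a m | simp)+
  also have "mu \<cdot> ((eta \<otimes> idm M) \<cdot> (idm I \<otimes> u)) = (mu \<cdot> (eta \<otimes> idm M)) \<cdot> (idm I \<otimes> u)"
    by (rule cmp_assoc) (rule arr_rules a m | simp)+
  also have "idm I \<otimes> u = u" by (rule tar_IL[OF a])
  finally show ?thesis using m id_left[OF a] by simp
qed

lemma dot_uR:
  assumes M: "is_monoid V M mu eta" and a: "arr u X M"
  shows "dotp V mu u eta = u"
proof -
  note m = mon[OF M]
  have "dotp V mu u eta = mu \<cdot> ((idm M \<cdot> u) \<otimes> (eta \<cdot> idm I))"
    unfolding dotp_def using id_left[OF a] id_right[OF m(3)] by simp
  also have "(idm M \<cdot> u) \<otimes> (eta \<cdot> idm I) = (idm M \<otimes> eta) \<cdot> (u \<otimes> idm I)"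
    by (rule interchange) (rule arr_rules a m | simp)+
  also have "mu \<cdot> ((idm M \<otimes> eta) \<cdot> (u \<otimes> idm I)) = (mu \<cdot> (idm M \<otimes> eta)) \<cdot> (u \<otimes> idm I)"
    by (rule cmp_assoc) (rule arr_rules a m | simp)+
  also have "u \<otimes> idm I = u" by (rule tar_IR[OF a])
  finally show ?thesis using m id_left[OF a] by simp
qed

lemma hom_dot:
  assumes h: "monoid_hom V M mu eta N nu th h" and M: "M \<in> ob V" "N \<in> ob V"
    and a: "arr u X M" "arr v Y M" "arr mu (M \<boxtimes> M) M" "arr nu (N \<boxtimes> N) N"
  shows "h \<cdot> dotp V mu u v = dotp V nu (h \<cdot> u) (h \<cdot> v)"
proof -
  have ha: "arr h M N" using h M unfolding monoid_hom_def arr_def by auto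
  have "h \<cdot> dotp V mu u v = (h \<cdot> mu) \<cdot> (u \<otimes> v)" unfolding dotp_def
    by (rule cmp_assoc) (rule arr_rules a ha | simp)+
  also have "h \<cdot> mu = nu \<cdot> (h \<otimes> h)" using h unfolding monoid_hom_def by simp
  also have "(nu \<cdot> (h \<otimes> h)) \<cdot> (u \<otimes> v) = nu \<cdot> ((h \<otimes> h) \<cdot> (u \<otimes> v))"
    by (rule cmp_assoc[symmetric]) (rule arr_rules a ha | simp)+
  also have "(h \<otimes> h) \<cdot> (u \<otimes> v) = (h \<cdot> u) \<otimes> (h \<cdot> v)"
    by (rule interchange[symmetric]) (rule arr_rules a ha | simp)+
  finally show ?thesis unfolding dotp_def .
qed

end


context bmc begin

lemma tm_arr: assumes "arr mu (M \<boxtimes> M) M" "arr nu (N \<boxtimes> N) N"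
  shows "arr (tmult V M mu N nu) ((M \<boxtimes> N) \<boxtimes> (M \<boxtimes> N)) (M \<boxtimes> N)"
proof -
  have ob: "M \<in> ob V" "N \<in> ob V" using assms arrD by auto
  show ?thesis unfolding tmult_def by (rule arr_rules assms | simp add: ob)+
qed

lemma tm_dot:
  assumes M: "is_monoid V M mu eta" and N: "is_monoid V N nu th"
    and a: "arr u X M" "arr v Y N" "arr u' X' M" "arr v' Y' N"
    and br: "c Y X' = idm (X' \<boxtimes> Y)"
  shows "dotp V (tmult V M mu N nu) (u \<otimes> v) (u' \<otimes> v') = dotp V mu u u' \<otimes> dotp V nu v v'"
proof -
  note m = mon[OF M] and n = mon[OF N]
  note ob = arrD(1,2)[OF a(1)] arrD(1,2)[OF a(2)] arrD(1,2)[OF a(3)] arrD(1,2)[OF a(4)]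
  have "dotp V (tmult V M mu N nu) (u \<otimes> v) (u' \<otimes> v') =
     (mu \<otimes> nu) \<cdot> (((idm M \<otimes> c N M) \<otimes> idm N) \<cdot> ((u \<otimes> v) \<otimes> (u' \<otimes> v')))"
    unfolding dotp_def tmult_def
    by (rule cmp_assoc[symmetric]) (rule arr_rules a m n | simp add: ob)+
  also have "(u \<otimes> v) \<otimes> (u' \<otimes> v') = u \<otimes> (v \<otimes> (u' \<otimes> v'))" by (rule tar_assoc) (rule arr_rules a | simp add: ob)+
  also have "v \<otimes> (u' \<otimes> v') = (v \<otimes> u') \<otimes> v'" by (rule tar_assoc[symmetric]) (rule arr_rules a | simp add: ob)+
  also have "u \<otimes> ((v \<otimes> u') \<otimes> v') = (u \<otimes> (v \<otimes> u')) \<otimes> v'" 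
    by (rule tar_assoc[symmetric]) (rule arr_rules a | simp)+
  also have "((idm M \<otimes> c N M) \<otimes> idm N) \<cdot> ((u \<otimes> (v \<otimes> u')) \<otimes> v') =
       ((idm M \<otimes> c N M) \<cdot> (u \<otimes> (v \<otimes> u'))) \<otimes> (idm N \<cdot> v')"
    by (rule interchange[symmetric]) (rule arr_rules a m n | simp add: ob)+
  also have "(idm M \<otimes> c N M) \<cdot> (u \<otimes> (v \<otimes> u')) = (idm M \<cdot> u) \<otimes> (c N M \<cdot> (v \<otimes> u'))"
    by (rule interchange[symmetric]) (rule arr_rules a m n | simp add: ob)+
  also have "c N M \<cdot> (v \<otimes> u') = (u' \<otimes> v) \<cdot> c Y X'" by (rule br_nat) (rule arr_rules a | simp add: ob)+
  also have "(u' \<otimes> v) \<cdot> c Y X' = u' \<otimes> v" using br id_right[OF arr_tar[OF a(3) a(2)]] by simp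
  also have "idm M \<cdot> u = u" by (rule id_left[OF a(1)])
  also have "idm N \<cdot> v' = v'" by (rule id_left[OF a(4)])
  also have "(u \<otimes> (u' \<otimes> v)) \<otimes> v' = u \<otimes> ((u' \<otimes> v) \<otimes> v')"
    by (rule tar_assoc) (rule arr_rules a | simp)+
  also have "(u' \<otimes> v) \<otimes> v' = u' \<otimes> (v \<otimes> v')" by (rule tar_assoc) (rule arr_rules a | simp add: ob)+
  also have "u \<otimes> (u' \<otimes> (v \<otimes> v')) = (u \<otimes> u') \<otimes> (v \<otimes> v')"
    by (rule tar_assoc[symmetric]) (rule arr_rules a | simp)+
  also have "(mu \<otimes> nu) \<cdot> ((u \<otimes> u') \<otimes> (v \<otimes> v')) = (mu \<cdot> (u \<otimes> u')) \<otimes> (nu \<cdot> (v \<otimes> v'))"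
    by (rule interchange[symmetric]) (rule arr_rules a m n | simp add: ob)+
  finally show ?thesis unfolding dotp_def .
qed

lemma tm_W:
  assumes ob: "M \<in> ob V" "N \<in> ob V"
  shows "(idm (M \<boxtimes> M) \<otimes> (c (N \<boxtimes> N) M \<otimes> idm N)) \<cdot> (((idm M \<otimes> c N M) \<otimes> idm N) \<otimes> idm (M \<boxtimes> N))
       = (idm M \<otimes> (c N (M \<boxtimes> M) \<otimes> idm (N \<boxtimes> N))) \<cdot> (idm (M \<boxtimes> N) \<otimes> ((idm M \<otimes> c N M) \<otimes> idm N))"
proof -
  let ?S = "c N M"
  have A: "idm M \<otimes> (c (N \<boxtimes> N) M \<otimes> idm N) = (idm M \<otimes> ((?S \<otimes> idm N) \<otimes> idm N)) \<cdot> (idm M \<otimes> ((idm N \<otimes> ?S) \<otimes> idm N))"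
  proof -
    have "c (N \<boxtimes> N) M = (?S \<otimes> idm N) \<cdot> (idm N \<otimes> ?S)" by (rule hex2) (simp_all add: ob)
    hence "idm M \<otimes> (c (N \<boxtimes> N) M \<otimes> idm N) = (idm M \<cdot> idm M) \<otimes> (((?S \<otimes> idm N) \<cdot> (idm N \<otimes> ?S)) \<otimes> (idm N \<cdot> idm N))"
      using id_left[OF arr_id[of M]] id_left[OF arr_id[of N]] ob by simp
    also have "((?S \<otimes> idm N) \<cdot> (idm N \<otimes> ?S)) \<otimes> (idm N \<cdot> idm N) = ((?S \<otimes> idm N) \<otimes> idm N) \<cdot> ((idm N \<otimes> ?S) \<otimes> idm N)"
      by (rule interchange) (rule arr_rules | simp add: ob)+
    also have "(idm M \<cdot> idm M) \<otimes> (((?S \<otimes> idm N) \<otimes> idm N) \<cdot> ((idm N \<otimes> ?S) \<otimes> idm N)) = (idm M \<otimes> ((?S \<otimes> idm N) \<otimes> idm N)) \<cdot> (idm M \<otimes> ((idm N \<otimes> ?S) \<otimes> idm N))"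
      by (rule interchange) (rule arr_rules | simp add: ob)+
    finally show ?thesis .
  qed
  have B: "idm M \<otimes> ((idm N \<otimes> ?S) \<otimes> idm N) = idm (M \<boxtimes> N) \<otimes> (?S \<otimes> idm N)"
  proof -
    have "idm M \<otimes> ((idm N \<otimes> ?S) \<otimes> idm N) = idm M \<otimes> (idm N \<otimes> (?S \<otimes> idm N))"
      by (subst tar_assoc) (rule arr_rules | simp add: ob)+
    also have "\<dots> = (idm M \<otimes> idm N) \<otimes> (?S \<otimes> idm N)" by (rule tar_assoc[symmetric]) (rule arr_rules | simp add: ob)+
    finally show ?thesis using tar_id ob by simp
  qed
  have C: "((idm M \<otimes> ?S) \<otimes> idm N) \<otimes> idm (M \<boxtimes> N) = idm M \<otimes> (?S \<otimes> idm (N \<boxtimes> M \<boxtimes> N))"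
  proof -
    have "((idm M \<otimes> ?S) \<otimes> idm N) \<otimes> idm (M \<boxtimes> N) = (idm M \<otimes> ?S) \<otimes> (idm N \<otimes> idm (M \<boxtimes> N))"
      by (rule tar_assoc) (rule arr_rules | simp add: ob)+
    also have "\<dots> = idm M \<otimes> (?S \<otimes> (idm N \<otimes> idm (M \<boxtimes> N)))" by (rule tar_assoc) (rule arr_rules | simp add: ob)+
    finally show ?thesis using tar_id ob by simp
  qed
  have BC: "idm (M \<boxtimes> N) \<otimes> (?S \<otimes> idm N) \<cdot> (?S \<otimes> idm (N \<boxtimes> M \<boxtimes> N)) = ?S \<otimes> (?S \<otimes> idm N)"
  proof -
    have "idm (M \<boxtimes> N) \<otimes> (?S \<otimes> idm N) \<cdot> (?S \<otimes> idm (N \<boxtimes> M \<boxtimes> N)) = (idm (M \<boxtimes> N) \<cdot> ?S) \<otimes> ((?S \<otimes> idm N) \<cdot> idm (N \<boxtimes> M \<boxtimes> N))"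
      by (rule interchange[symmetric]) (rule arr_rules | simp add: ob)+
    also have "idm (M \<boxtimes> N) \<cdot> ?S = ?S" by (rule id_left) (rule arr_rules | simp add: ob)+
    also have "(?S \<otimes> idm N) \<cdot> idm (N \<boxtimes> M \<boxtimes> N) = ?S \<otimes> idm N" by (rule id_right) (rule arr_rules | simp add: ob)+
    finally show ?thesis .
  qed
  have A': "c N (M \<boxtimes> M) \<otimes> idm (N \<boxtimes> N) = ((idm M \<otimes> ?S) \<otimes> idm (N \<boxtimes> N)) \<cdot> ((?S \<otimes> idm M) \<otimes> idm (N \<boxtimes> N))"
  proof -
    have "c N (M \<boxtimes> M) = (idm M \<otimes> ?S) \<cdot> (?S \<otimes> idm M)" by (rule hex1) (simp_all add: ob)
    hence "c N (M \<boxtimes> M) \<otimes> idm (N \<boxtimes> N) = ((idm M \<otimes> ?S) \<cdot> (?S \<otimes> idm M)) \<otimes> (idm (N \<boxtimes> N) \<cdot> idm (N \<boxtimes> N))"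
      using id_left[OF arr_id[of "N \<boxtimes> N"]] ob by simp
    also have "\<dots> = ((idm M \<otimes> ?S) \<otimes> idm (N \<boxtimes> N)) \<cdot> ((?S \<otimes> idm M) \<otimes> idm (N \<boxtimes> N))"
      by (rule interchange) (rule arr_rules | simp add: ob)+
    finally show ?thesis .
  qed
  have B': "(?S \<otimes> idm M) \<otimes> idm (N \<boxtimes> N) = ?S \<otimes> idm (M \<boxtimes> N \<boxtimes> N)"
  proof -
    have "(?S \<otimes> idm M) \<otimes> idm (N \<boxtimes> N) = ?S \<otimes> (idm M \<otimes> idm (N \<boxtimes> N))" by (rule tar_assoc) (rule arr_rules | simp add: ob)+
    thus ?thesis using tar_id ob by simp
  qed
  have C': "idm (M \<boxtimes> N) \<otimes> ((idm M \<otimes> ?S) \<otimes> idm N) = idm M \<otimes> (idm (N \<boxtimes> M) \<otimes> (?S \<otimes> idm N))"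
  proof -
    have "idm (M \<boxtimes> N) \<otimes> ((idm M \<otimes> ?S) \<otimes> idm N) = (idm M \<otimes> idm N) \<otimes> (idm M \<otimes> (?S \<otimes> idm N))"
      using tar_id ob tar_assoc[of "idm M" M M ?S "N \<boxtimes> M" "M \<boxtimes> N" "idm N" N N] arr_id arr_br by simp
    also have "\<dots> = idm M \<otimes> (idm N \<otimes> (idm M \<otimes> (?S \<otimes> idm N)))" by (rule tar_assoc) (rule arr_rules | simp add: ob)+
    also have "idm N \<otimes> (idm M \<otimes> (?S \<otimes> idm N)) = (idm N \<otimes> idm M) \<otimes> (?S \<otimes> idm N)" by (rule tar_assoc[symmetric]) (rule arr_rules | simp add: ob)+
    finally show ?thesis using tar_id ob by simp
  qed
  have BC': "(?S \<otimes> idm (M \<boxtimes> N \<boxtimes> N)) \<cdot> (idm (N \<boxtimes> M) \<otimes> (?S \<otimes> idm N)) = ?S \<otimes> (?S \<otimes> idm N)"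
  proof -
    have "(?S \<otimes> idm (M \<boxtimes> N \<boxtimes> N)) \<cdot> (idm (N \<boxtimes> M) \<otimes> (?S \<otimes> idm N)) = (?S \<cdot> idm (N \<boxtimes> M)) \<otimes> (idm (M \<boxtimes> N \<boxtimes> N) \<cdot> (?S \<otimes> idm N))"
      by (rule interchange[symmetric]) (rule arr_rules | simp add: ob)+
    also have "?S \<cdot> idm (N \<boxtimes> M) = ?S" by (rule id_right) (rule arr_rules | simp add: ob)+
    also have "idm (M \<boxtimes> N \<boxtimes> N) \<cdot> (?S \<otimes> idm N) = ?S \<otimes> idm N" by (rule id_left) (rule arr_rules | simp add: ob)+
    finally show ?thesis .
  qed
  have AA: "idm M \<otimes> ((?S \<otimes> idm N) \<otimes> idm N) = (idm M \<otimes> ?S) \<otimes> idm (N \<boxtimes> N)"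
  proof -
    have "(?S \<otimes> idm N) \<otimes> idm N = ?S \<otimes> (idm N \<otimes> idm N)" by (rule tar_assoc) (rule arr_rules | simp add: ob)+
    moreover have "(idm M \<otimes> ?S) \<otimes> (idm N \<otimes> idm N) = idm M \<otimes> (?S \<otimes> (idm N \<otimes> idm N))" by (rule tar_assoc) (rule arr_rules | simp add: ob)+
    ultimately show ?thesis using tar_id ob by simp
  qed
  have X1: "(idm M \<otimes> (c (N \<boxtimes> N) M \<otimes> idm N)) \<cdot> (?S \<otimes> idm (N \<boxtimes> M \<boxtimes> N)) = (idm M \<otimes> ?S) \<otimes> idm (N \<boxtimes> N) \<cdot> ?S \<otimes> (?S \<otimes> idm N)"
  proof -
    have "(idm M \<otimes> (c (N \<boxtimes> N) M \<otimes> idm N)) \<cdot> (?S \<otimes> idm (N \<boxtimes> M \<boxtimes> N)) =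
      ((idm M \<otimes> ((?S \<otimes> idm N) \<otimes> idm N)) \<cdot> (idm M \<otimes> ((idm N \<otimes> ?S) \<otimes> idm N))) \<cdot> (?S \<otimes> idm (N \<boxtimes> M \<boxtimes> N))"
      using A by simp
    also have "\<dots> = (idm M \<otimes> ((?S \<otimes> idm N) \<otimes> idm N)) \<cdot> ((idm M \<otimes> ((idm N \<otimes> ?S) \<otimes> idm N)) \<cdot> (?S \<otimes> idm (N \<boxtimes> M \<boxtimes> N)))"
      by (rule cmp_assoc[symmetric]) (rule arr_rules | simp add: ob)+
    finally show ?thesis using B BC AA by simp
  qed
  have X2: "(c N (M \<boxtimes> M) \<otimes> idm (N \<boxtimes> N)) \<cdot> (idm (N \<boxtimes> M) \<otimes> (?S \<otimes> idm N)) = (idm M \<otimes> ?S) \<otimes> idm (N \<boxtimes> N) \<cdot> ?S \<otimes> (?S \<otimes> idm N)"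
  proof -
    have "(c N (M \<boxtimes> M) \<otimes> idm (N \<boxtimes> N)) \<cdot> (idm (N \<boxtimes> M) \<otimes> (?S \<otimes> idm N)) =
      (((idm M \<otimes> ?S) \<otimes> idm (N \<boxtimes> N)) \<cdot> ((?S \<otimes> idm M) \<otimes> idm (N \<boxtimes> N))) \<cdot> (idm (N \<boxtimes> M) \<otimes> (?S \<otimes> idm N))"
      using A' by simp
    also have "\<dots> = ((idm M \<otimes> ?S) \<otimes> idm (N \<boxtimes> N)) \<cdot> (((?S \<otimes> idm M) \<otimes> idm (N \<boxtimes> N)) \<cdot> (idm (N \<boxtimes> M) \<otimes> (?S \<otimes> idm N)))"
      by (rule cmp_assoc[symmetric]) (rule arr_rules | simp add: ob)+
    finally show ?thesis using B' BC' by simp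
  qed
  have W1: "(idm (M \<boxtimes> M) \<otimes> (c (N \<boxtimes> N) M \<otimes> idm N)) \<cdot> (((idm M \<otimes> c N M) \<otimes> idm N) \<otimes> idm (M \<boxtimes> N))
      = idm M \<otimes> ((idm M \<otimes> (c (N \<boxtimes> N) M \<otimes> idm N)) \<cdot> (?S \<otimes> idm (N \<boxtimes> M \<boxtimes> N)))"
  proof -
    have "idm (M \<boxtimes> M) \<otimes> (c (N \<boxtimes> N) M \<otimes> idm N) = (idm M \<otimes> idm M) \<otimes> (c (N \<boxtimes> N) M \<otimes> idm N)"
      using tar_id ob by simp
    also have "\<dots> = idm M \<otimes> (idm M \<otimes> (c (N \<boxtimes> N) M \<otimes> idm N))" by (rule tar_assoc) (rule arr_rules | simp add: ob)+
    finally have "(idm (M \<boxtimes> M) \<otimes> (c (N \<boxtimes> N) M \<otimes> idm N)) \<cdot> (((idm M \<otimes> c N M) \<otimes> idm N) \<otimes> idm (M \<boxtimes> N))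
      = (idm M \<otimes> (idm M \<otimes> (c (N \<boxtimes> N) M \<otimes> idm N))) \<cdot> (idm M \<otimes> (?S \<otimes> idm (N \<boxtimes> M \<boxtimes> N)))"
      using C by simp
    also have "\<dots> = (idm M \<cdot> idm M) \<otimes> ((idm M \<otimes> (c (N \<boxtimes> N) M \<otimes> idm N)) \<cdot> (?S \<otimes> idm (N \<boxtimes> M \<boxtimes> N)))"
      by (rule interchange[symmetric]) (rule arr_rules | simp add: ob)+
    also have "idm M \<cdot> idm M = idm M" by (rule id_left) (rule arr_rules | simp add: ob)+
    finally show ?thesis .
  qed
  have W2: "(idm M \<otimes> (c N (M \<boxtimes> M) \<otimes> idm (N \<boxtimes> N))) \<cdot> (idm (M \<boxtimes> N) \<otimes> ((idm M \<otimes> c N M) \<otimes> idm N))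
     = idm M \<otimes> ((c N (M \<boxtimes> M) \<otimes> idm (N \<boxtimes> N)) \<cdot> (idm (N \<boxtimes> M) \<otimes> (?S \<otimes> idm N)))"
  proof -
    have "(idm M \<otimes> (c N (M \<boxtimes> M) \<otimes> idm (N \<boxtimes> N))) \<cdot> (idm (M \<boxtimes> N) \<otimes> ((idm M \<otimes> c N M) \<otimes> idm N))
      = (idm M \<otimes> (c N (M \<boxtimes> M) \<otimes> idm (N \<boxtimes> N))) \<cdot> (idm M \<otimes> (idm (N \<boxtimes> M) \<otimes> (?S \<otimes> idm N)))"
      using C' by simp
    also have "\<dots> = (idm M \<cdot> idm M) \<otimes> ((c N (M \<boxtimes> M) \<otimes> idm (N \<boxtimes> N)) \<cdot> (idm (N \<boxtimes> M) \<otimes> (?S \<otimes> idm N)))"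
      by (rule interchange[symmetric]) (rule arr_rules | simp add: ob)+
    also have "idm M \<cdot> idm M = idm M" by (rule id_left) (rule arr_rules | simp add: ob)+
    finally show ?thesis .
  qed
  show ?thesis using W1 W2 X1 X2 by simp
qed

lemma tm_L:
  assumes ob: "M \<in> ob V" "N \<in> ob V" and a: "arr mu (M \<boxtimes> M) M" "arr nu (N \<boxtimes> N) N"
  shows "tmult V M mu N nu \<cdot> (tmult V M mu N nu \<otimes> idm (M \<boxtimes> N)) =
    ((mu \<cdot> (mu \<otimes> idm M)) \<otimes> (nu \<cdot> (nu \<otimes> idm N))) \<cdot>
    ((idm (M \<boxtimes> M) \<otimes> (c (N \<boxtimes> N) M \<otimes> idm N)) \<cdot> (((idm M \<otimes> c N M) \<otimes> idm N) \<otimes> idm (M \<boxtimes> N)))"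
proof -
  let ?K = "(idm M \<otimes> c N M) \<otimes> idm N"
  let ?P = "(mu \<otimes> nu) \<otimes> idm (M \<boxtimes> N)"
  let ?Q = "?K \<otimes> idm (M \<boxtimes> N)"
  let ?Y = "idm (M \<boxtimes> M) \<otimes> (c (N \<boxtimes> N) M \<otimes> idm N)"
  let ?X = "mu \<otimes> ((idm M \<otimes> nu) \<otimes> idm N)"
  have L1: "tmult V M mu N nu \<otimes> idm (M \<boxtimes> N) = ?P \<cdot> ?Q"
  proof -
    have "tmult V M mu N nu \<otimes> idm (M \<boxtimes> N) = ((mu \<otimes> nu) \<cdot> ?K) \<otimes> (idm (M \<boxtimes> N) \<cdot> idm (M \<boxtimes> N))"
      unfolding tmult_def using id_left[OF arr_id[of "M \<boxtimes> N"]] ob by simp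
    also have "\<dots> = ?P \<cdot> ?Q" by (rule interchange) (rule arr_rules a | simp add: ob)+
    finally show ?thesis .
  qed
  have Kassoc: "?K = idm M \<otimes> (c N M \<otimes> idm N)" by (rule tar_assoc) (rule arr_rules a | simp add: ob)+
  have L3: "?K \<cdot> ?P = ?X \<cdot> ?Y"
  proof -
    have "?P = (mu \<otimes> nu) \<otimes> (idm M \<otimes> idm N)" using tar_id ob by simp
    also have "\<dots> = mu \<otimes> (nu \<otimes> (idm M \<otimes> idm N))" by (rule tar_assoc) (rule arr_rules a | simp add: ob)+
    also have "nu \<otimes> (idm M \<otimes> idm N) = (nu \<otimes> idm M) \<otimes> idm N" by (rule tar_assoc[symmetric]) (rule arr_rules a | simp add: ob)+
    finally have "?K \<cdot> ?P = (idm M \<otimes> (c N M \<otimes> idm N)) \<cdot> (mu \<otimes> ((nu \<otimes> idm M) \<otimes> idm N))"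
      using Kassoc by simp
    also have "\<dots> = (idm M \<cdot> mu) \<otimes> ((c N M \<otimes> idm N) \<cdot> ((nu \<otimes> idm M) \<otimes> idm N))"
      by (rule interchange[symmetric]) (rule arr_rules a | simp add: ob)+
    also have "(c N M \<otimes> idm N) \<cdot> ((nu \<otimes> idm M) \<otimes> idm N) = (c N M \<cdot> (nu \<otimes> idm M)) \<otimes> (idm N \<cdot> idm N)"
      by (rule interchange[symmetric]) (rule arr_rules a | simp add: ob)+
    also have "c N M \<cdot> (nu \<otimes> idm M) = (idm M \<otimes> nu) \<cdot> c (N \<boxtimes> N) M" by (rule br_nat) (rule arr_rules a | simp add: ob)+
    also have "((idm M \<otimes> nu) \<cdot> c (N \<boxtimes> N) M) \<otimes> (idm N \<cdot> idm N) = ((idm M \<otimes> nu) \<otimes> idm N) \<cdot> (c (N \<boxtimes> N) M \<otimes> idm N)"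
      by (rule interchange) (rule arr_rules a | simp add: ob)+
    also have "idm M \<cdot> mu = mu \<cdot> idm (M \<boxtimes> M)" using id_left[OF a(1)] id_right[OF a(1)] by simp
    also have "(mu \<cdot> idm (M \<boxtimes> M)) \<otimes> (((idm M \<otimes> nu) \<otimes> idm N) \<cdot> (c (N \<boxtimes> N) M \<otimes> idm N)) = ?X \<cdot> ?Y"
      by (rule interchange) (rule arr_rules a | simp add: ob)+
    finally show ?thesis .
  qed
  have L4: "(mu \<otimes> nu) \<cdot> ?X = (mu \<cdot> (mu \<otimes> idm M)) \<otimes> (nu \<cdot> (nu \<otimes> idm N))"
  proof -
    have "(idm M \<otimes> nu) \<otimes> idm N = idm M \<otimes> (nu \<otimes> idm N)" by (rule tar_assoc) (rule arr_rules a | simp add: ob)+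
    moreover have "mu \<otimes> (idm M \<otimes> (nu \<otimes> idm N)) = (mu \<otimes> idm M) \<otimes> (nu \<otimes> idm N)" by (rule tar_assoc[symmetric]) (rule arr_rules a | simp add: ob)+
    moreover have "(mu \<otimes> nu) \<cdot> ((mu \<otimes> idm M) \<otimes> (nu \<otimes> idm N)) = (mu \<cdot> (mu \<otimes> idm M)) \<otimes> (nu \<cdot> (nu \<otimes> idm N))"
      by (rule interchange[symmetric]) (rule arr_rules a | simp add: ob)+
    ultimately show ?thesis by simp
  qed
  have "tmult V M mu N nu \<cdot> (tmult V M mu N nu \<otimes> idm (M \<boxtimes> N)) = ((mu \<otimes> nu) \<cdot> ?K) \<cdot> (?P \<cdot> ?Q)"
    using L1 unfolding tmult_def by simp
  also have "\<dots> = (mu \<otimes> nu) \<cdot> (?K \<cdot> (?P \<cdot> ?Q))" by (rule cmp_assoc[symmetric]) (rule arr_rules a | simp add: ob)+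
  also have "?K \<cdot> (?P \<cdot> ?Q) = (?K \<cdot> ?P) \<cdot> ?Q" by (rule cmp_assoc) (rule arr_rules a | simp add: ob)+
  also note L3
  also have "(mu \<otimes> nu) \<cdot> ((?X \<cdot> ?Y) \<cdot> ?Q) = (mu \<otimes> nu) \<cdot> (?X \<cdot> (?Y \<cdot> ?Q))"
    by (subst cmp_assoc[symmetric]) (rule arr_rules a | simp add: ob)+
  also have "\<dots> = ((mu \<otimes> nu) \<cdot> ?X) \<cdot> (?Y \<cdot> ?Q)" by (rule cmp_assoc) (rule arr_rules a | simp add: ob)+
  also note L4
  finally show ?thesis .
qed

lemma tm_R:
  assumes ob: "M \<in> ob V" "N \<in> ob V" and a: "arr mu (M \<boxtimes> M) M" "arr nu (N \<boxtimes> N) N"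
  shows "tmult V M mu N nu \<cdot> (idm (M \<boxtimes> N) \<otimes> tmult V M mu N nu) =
    ((mu \<cdot> (idm M \<otimes> mu)) \<otimes> (nu \<cdot> (idm N \<otimes> nu))) \<cdot>
    ((idm M \<otimes> (c N (M \<boxtimes> M) \<otimes> idm (N \<boxtimes> N))) \<cdot> (idm (M \<boxtimes> N) \<otimes> ((idm M \<otimes> c N M) \<otimes> idm N)))"
proof -
  let ?K = "(idm M \<otimes> c N M) \<otimes> idm N"
  let ?P = "idm (M \<boxtimes> N) \<otimes> (mu \<otimes> nu)"
  let ?Q = "idm (M \<boxtimes> N) \<otimes> ?K"
  let ?Y = "idm M \<otimes> (c N (M \<boxtimes> M) \<otimes> idm (N \<boxtimes> N))"
  let ?X = "idm M \<otimes> ((mu \<otimes> idm N) \<otimes> nu)"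
  have L1: "idm (M \<boxtimes> N) \<otimes> tmult V M mu N nu = ?P \<cdot> ?Q"
  proof -
    have "idm (M \<boxtimes> N) \<otimes> tmult V M mu N nu = (idm (M \<boxtimes> N) \<cdot> idm (M \<boxtimes> N)) \<otimes> ((mu \<otimes> nu) \<cdot> ?K)"
      unfolding tmult_def using id_left[OF arr_id[of "M \<boxtimes> N"]] ob by simp
    also have "\<dots> = ?P \<cdot> ?Q" by (rule interchange) (rule arr_rules a | simp add: ob)+
    finally show ?thesis .
  qed
  have Kassoc: "?K = idm M \<otimes> (c N M \<otimes> idm N)" by (rule tar_assoc) (rule arr_rules a | simp add: ob)+
  have L3: "?K \<cdot> ?P = ?X \<cdot> ?Y"
  proof -
    have "?P = (idm M \<otimes> idm N) \<otimes> (mu \<otimes> nu)" using tar_id ob by simp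
    also have "\<dots> = idm M \<otimes> (idm N \<otimes> (mu \<otimes> nu))" by (rule tar_assoc) (rule arr_rules a | simp add: ob)+
    also have "idm N \<otimes> (mu \<otimes> nu) = (idm N \<otimes> mu) \<otimes> nu" by (rule tar_assoc[symmetric]) (rule arr_rules a | simp add: ob)+
    finally have "?K \<cdot> ?P = (idm M \<otimes> (c N M \<otimes> idm N)) \<cdot> (idm M \<otimes> ((idm N \<otimes> mu) \<otimes> nu))"
      using Kassoc by simp
    also have "\<dots> = (idm M \<cdot> idm M) \<otimes> ((c N M \<otimes> idm N) \<cdot> ((idm N \<otimes> mu) \<otimes> nu))"
      by (rule interchange[symmetric]) (rule arr_rules a | simp add: ob)+
    also have "(c N M \<otimes> idm N) \<cdot> ((idm N \<otimes> mu) \<otimes> nu) = (c N M \<cdot> (idm N \<otimes> mu)) \<otimes> (idm N \<cdot> nu)"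
      by (rule interchange[symmetric]) (rule arr_rules a | simp add: ob)+
    also have "c N M \<cdot> (idm N \<otimes> mu) = (mu \<otimes> idm N) \<cdot> c N (M \<boxtimes> M)" by (rule br_nat) (rule arr_rules a | simp add: ob)+
    also have "idm N \<cdot> nu = nu \<cdot> idm (N \<boxtimes> N)" using id_left[OF a(2)] id_right[OF a(2)] by simp
    also have "((mu \<otimes> idm N) \<cdot> c N (M \<boxtimes> M)) \<otimes> (nu \<cdot> idm (N \<boxtimes> N)) = ((mu \<otimes> idm N) \<otimes> nu) \<cdot> (c N (M \<boxtimes> M) \<otimes> idm (N \<boxtimes> N))"
      by (rule interchange) (rule arr_rules a | simp add: ob)+
    also have "(idm M \<cdot> idm M) \<otimes> (((mu \<otimes> idm N) \<otimes> nu) \<cdot> (c N (M \<boxtimes> M) \<otimes> idm (N \<boxtimes> N))) = ?X \<cdot> ?Y"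
      by (rule interchange) (rule arr_rules a | simp add: ob)+
    finally show ?thesis .
  qed
  have L4: "(mu \<otimes> nu) \<cdot> ?X = (mu \<cdot> (idm M \<otimes> mu)) \<otimes> (nu \<cdot> (idm N \<otimes> nu))"
  proof -
    have "(mu \<otimes> idm N) \<otimes> nu = mu \<otimes> (idm N \<otimes> nu)" by (rule tar_assoc) (rule arr_rules a | simp add: ob)+
    moreover have "idm M \<otimes> (mu \<otimes> (idm N \<otimes> nu)) = (idm M \<otimes> mu) \<otimes> (idm N \<otimes> nu)" by (rule tar_assoc[symmetric]) (rule arr_rules a | simp add: ob)+
    moreover have "(mu \<otimes> nu) \<cdot> ((idm M \<otimes> mu) \<otimes> (idm N \<otimes> nu)) = (mu \<cdot> (idm M \<otimes> mu)) \<otimes> (nu \<cdot> (idm N \<otimes> nu))"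
      by (rule interchange[symmetric]) (rule arr_rules a | simp add: ob)+
    ultimately show ?thesis by simp
  qed
  have "tmult V M mu N nu \<cdot> (idm (M \<boxtimes> N) \<otimes> tmult V M mu N nu) = ((mu \<otimes> nu) \<cdot> ?K) \<cdot> (?P \<cdot> ?Q)"
    using L1 unfolding tmult_def by simp
  also have "\<dots> = (mu \<otimes> nu) \<cdot> (?K \<cdot> (?P \<cdot> ?Q))" by (rule cmp_assoc[symmetric]) (rule arr_rules a | simp add: ob)+
  also have "?K \<cdot> (?P \<cdot> ?Q) = (?K \<cdot> ?P) \<cdot> ?Q" by (rule cmp_assoc) (rule arr_rules a | simp add: ob)+
  also note L3
  also have "(mu \<otimes> nu) \<cdot> ((?X \<cdot> ?Y) \<cdot> ?Q) = (mu \<otimes> nu) \<cdot> (?X \<cdot> (?Y \<cdot> ?Q))"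
    by (subst cmp_assoc[symmetric]) (rule arr_rules a | simp add: ob)+
  also have "\<dots> = ((mu \<otimes> nu) \<cdot> ?X) \<cdot> (?Y \<cdot> ?Q)" by (rule cmp_assoc) (rule arr_rules a | simp add: ob)+
  also note L4
  finally show ?thesis .
qed

lemma tm_monoid:
  assumes M: "is_monoid V M mu eta" and N: "is_monoid V N nu th"
  shows "is_monoid V (M \<boxtimes> N) (tmult V M mu N nu) (eta \<otimes> th)"
proof -
  note m = mon[OF M] and n = mon[OF N]
  note ob = m(1) n(1)
  have a: "arr (tmult V M mu N nu) ((M \<boxtimes> N) \<boxtimes> (M \<boxtimes> N)) (M \<boxtimes> N)" by (rule tm_arr[OF m(2) n(2)])
  have e: "arr (eta \<otimes> th) I (M \<boxtimes> N)" by (rule arr_rules a m n | simp add: ob)+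
  have as: "tmult V M mu N nu \<cdot> (tmult V M mu N nu \<otimes> idm (M \<boxtimes> N)) = tmult V M mu N nu \<cdot> (idm (M \<boxtimes> N) \<otimes> tmult V M mu N nu)"
    using tm_L[OF ob m(2) n(2)] tm_R[OF ob m(2) n(2)] tm_W[OF ob] m(4) n(4) by simp
  have "tmult V M mu N nu \<cdot> ((eta \<otimes> th) \<otimes> idm (M \<boxtimes> N)) = dotp V (tmult V M mu N nu) (eta \<otimes> th) (idm M \<otimes> idm N)"
    unfolding dotp_def using tar_id ob by simp
  also have "\<dots> = dotp V mu eta (idm M) \<otimes> dotp V nu th (idm N)"
    by (rule tm_dot[OF M N m(3) n(3) arr_id[OF m(1)] arr_id[OF n(1)]]) (simp add: ob br_IX)
  also have "\<dots> = idm (M \<boxtimes> N)" using dot_uL[OF M arr_id] dot_uL[OF N arr_id] tar_id ob by simp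
  finally have ul: "tmult V M mu N nu \<cdot> ((eta \<otimes> th) \<otimes> idm (M \<boxtimes> N)) = idm (M \<boxtimes> N)" .
  have "tmult V M mu N nu \<cdot> (idm (M \<boxtimes> N) \<otimes> (eta \<otimes> th)) = dotp V (tmult V M mu N nu) (idm M \<otimes> idm N) (eta \<otimes> th)"
    unfolding dotp_def using tar_id ob by simp
  also have "\<dots> = dotp V mu (idm M) eta \<otimes> dotp V nu (idm N) th"
    by (rule tm_dot[OF M N arr_id[OF m(1)] arr_id[OF n(1)] m(3) n(3)]) (simp add: ob br_XI)
  also have "\<dots> = idm (M \<boxtimes> N)" using dot_uR[OF M arr_id] dot_uR[OF N arr_id] tar_id ob by simp
  finally have ur: "tmult V M mu N nu \<cdot> (idm (M \<boxtimes> N) \<otimes> (eta \<otimes> th)) = idm (M \<boxtimes> N)" .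
  show ?thesis unfolding is_monoid_def using a e as ul ur ob unfolding arr_def by simp
qed

lemma tm_struct:
  assumes ob: "M \<in> ob V" "N \<in> ob V" "P \<in> ob V" and a: "arr mu (M \<boxtimes> M) M" "arr nu (N \<boxtimes> N) N" "arr rho (P \<boxtimes> P) P"
  shows "tmult V (M \<boxtimes> N) (tmult V M mu N nu) P rho = tmult V M mu (N \<boxtimes> P) (tmult V N nu P rho)"
proof -
  let ?K1 = "(idm M \<otimes> c N M) \<otimes> idm N"
  let ?K2 = "(idm N \<otimes> c P N) \<otimes> idm P"
  let ?WL = "(?K1 \<otimes> idm (P \<boxtimes> P)) \<cdot> ((idm (M \<boxtimes> N) \<otimes> c P (M \<boxtimes> N)) \<otimes> idm P)"
  let ?WR = "(idm (M \<boxtimes> M) \<otimes> ?K2) \<cdot> ((idm M \<otimes> c (N \<boxtimes> P) M) \<otimes> idm (N \<boxtimes> P))"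
  have L: "tmult V (M \<boxtimes> N) (tmult V M mu N nu) P rho = ((mu \<otimes> nu) \<otimes> rho) \<cdot> ?WL"
  proof -
    have "tmult V M mu N nu \<otimes> rho = ((mu \<otimes> nu) \<cdot> ?K1) \<otimes> (rho \<cdot> idm (P \<boxtimes> P))"
      unfolding tmult_def using id_right[OF a(3)] by simp
    also have "\<dots> = ((mu \<otimes> nu) \<otimes> rho) \<cdot> (?K1 \<otimes> idm (P \<boxtimes> P))" by (rule interchange) (rule arr_rules a | simp add: ob)+
    finally have "tmult V (M \<boxtimes> N) (tmult V M mu N nu) P rho = (((mu \<otimes> nu) \<otimes> rho) \<cdot> (?K1 \<otimes> idm (P \<boxtimes> P))) \<cdot> ((idm (M \<boxtimes> N) \<otimes> c P (M \<boxtimes> N)) \<otimes> idm P)"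
      unfolding tmult_def[of V "M \<boxtimes> N"] by simp
    also have "\<dots> = ((mu \<otimes> nu) \<otimes> rho) \<cdot> ?WL" by (rule cmp_assoc[symmetric]) (rule arr_rules a | simp add: ob)+
    finally show ?thesis .
  qed
  have R: "tmult V M mu (N \<boxtimes> P) (tmult V N nu P rho) = (mu \<otimes> (nu \<otimes> rho)) \<cdot> ?WR"
  proof -
    have "mu \<otimes> tmult V N nu P rho = (mu \<cdot> idm (M \<boxtimes> M)) \<otimes> ((nu \<otimes> rho) \<cdot> ?K2)"
      unfolding tmult_def using id_right[OF a(1)] by simp
    also have "\<dots> = (mu \<otimes> (nu \<otimes> rho)) \<cdot> (idm (M \<boxtimes> M) \<otimes> ?K2)" by (rule interchange) (rule arr_rules a | simp add: ob)+
    finally have "tmult V M mu (N \<boxtimes> P) (tmult V N nu P rho) = ((mu \<otimes> (nu \<otimes> rho)) \<cdot> (idm (M \<boxtimes> M) \<otimes> ?K2)) \<cdot> ((idm M \<otimes> c (N \<boxtimes> P) M) \<otimes> idm (N \<boxtimes> P))"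
      unfolding tmult_def[of V M mu "N \<boxtimes> P"] by simp
    also have "\<dots> = (mu \<otimes> (nu \<otimes> rho)) \<cdot> ?WR" by (rule cmp_assoc[symmetric]) (rule arr_rules a | simp add: ob)+
    finally show ?thesis .
  qed
  have mnr: "(mu \<otimes> nu) \<otimes> rho = mu \<otimes> (nu \<otimes> rho)" by (rule tar_assoc) (rule arr_rules a | simp add: ob)+
  have WL: "?WL = idm M \<otimes> ((c N M \<otimes> (c P N \<otimes> idm P)) \<cdot> (idm N \<otimes> ((c P M \<otimes> idm N) \<otimes> idm P)))"
  proof -
    have k1: "?K1 \<otimes> idm (P \<boxtimes> P) = idm M \<otimes> (c N M \<otimes> idm (N \<boxtimes> P \<boxtimes> P))"
    proof -
      have "?K1 \<otimes> idm (P \<boxtimes> P) = (idm M \<otimes> c N M) \<otimes> (idm N \<otimes> idm (P \<boxtimes> P))" by (rule tar_assoc) (rule arr_rules a | simp add: ob)+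
      also have "\<dots> = idm M \<otimes> (c N M \<otimes> (idm N \<otimes> idm (P \<boxtimes> P)))" by (rule tar_assoc) (rule arr_rules a | simp add: ob)+
      finally show ?thesis using tar_id ob by simp
    qed
    have cp: "c P (M \<boxtimes> N) = (idm M \<otimes> c P N) \<cdot> (c P M \<otimes> idm N)" by (rule hex1) (simp_all add: ob)
    have k2: "(idm (M \<boxtimes> N) \<otimes> c P (M \<boxtimes> N)) \<otimes> idm P = idm M \<otimes> (idm N \<otimes> (c P (M \<boxtimes> N) \<otimes> idm P))"
    proof -
      have "(idm (M \<boxtimes> N) \<otimes> c P (M \<boxtimes> N)) \<otimes> idm P = ((idm M \<otimes> idm N) \<otimes> c P (M \<boxtimes> N)) \<otimes> idm P" using tar_id ob by simp
      also have "\<dots> = (idm M \<otimes> idm N) \<otimes> (c P (M \<boxtimes> N) \<otimes> idm P)" by (rule tar_assoc) (rule arr_rules a | simp add: ob)+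
      also have "\<dots> = idm M \<otimes> (idm N \<otimes> (c P (M \<boxtimes> N) \<otimes> idm P))" by (rule tar_assoc) (rule arr_rules a | simp add: ob)+
      finally show ?thesis .
    qed
    have "?WL = (idm M \<cdot> idm M) \<otimes> ((c N M \<otimes> idm (N \<boxtimes> P \<boxtimes> P)) \<cdot> (idm N \<otimes> (c P (M \<boxtimes> N) \<otimes> idm P)))"
      unfolding k1 k2 by (rule interchange[symmetric]) (rule arr_rules a | simp add: ob)+
    also have "idm M \<cdot> idm M = idm M" by (rule id_left) (rule arr_rules a | simp add: ob)+
    also have "idm N \<otimes> (c P (M \<boxtimes> N) \<otimes> idm P) = (idm N \<otimes> ((idm M \<otimes> c P N) \<otimes> idm P)) \<cdot> (idm N \<otimes> ((c P M \<otimes> idm N) \<otimes> idm P))"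
    proof -
      have "idm N \<otimes> (c P (M \<boxtimes> N) \<otimes> idm P) = (idm N \<cdot> idm N) \<otimes> (((idm M \<otimes> c P N) \<cdot> (c P M \<otimes> idm N)) \<otimes> (idm P \<cdot> idm P))"
        using cp id_left[OF arr_id[of N]] id_left[OF arr_id[of P]] ob by simp
      also have "((idm M \<otimes> c P N) \<cdot> (c P M \<otimes> idm N)) \<otimes> (idm P \<cdot> idm P) = ((idm M \<otimes> c P N) \<otimes> idm P) \<cdot> ((c P M \<otimes> idm N) \<otimes> idm P)"
        by (rule interchange) (rule arr_rules a | simp add: ob)+
      also have "(idm N \<cdot> idm N) \<otimes> (((idm M \<otimes> c P N) \<otimes> idm P) \<cdot> ((c P M \<otimes> idm N) \<otimes> idm P)) = (idm N \<otimes> ((idm M \<otimes> c P N) \<otimes> idm P)) \<cdot> (idm N \<otimes> ((c P M \<otimes> idm N) \<otimes> idm P))"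
        by (rule interchange) (rule arr_rules a | simp add: ob)+
      finally show ?thesis .
    qed
    also have "(c N M \<otimes> idm (N \<boxtimes> P \<boxtimes> P)) \<cdot> ((idm N \<otimes> ((idm M \<otimes> c P N) \<otimes> idm P)) \<cdot> (idm N \<otimes> ((c P M \<otimes> idm N) \<otimes> idm P)))
       = ((c N M \<otimes> idm (N \<boxtimes> P \<boxtimes> P)) \<cdot> (idm N \<otimes> ((idm M \<otimes> c P N) \<otimes> idm P))) \<cdot> (idm N \<otimes> ((c P M \<otimes> idm N) \<otimes> idm P))"
      by (rule cmp_assoc) (rule arr_rules a | simp add: ob)+
    also have "(c N M \<otimes> idm (N \<boxtimes> P \<boxtimes> P)) \<cdot> (idm N \<otimes> ((idm M \<otimes> c P N) \<otimes> idm P)) = c N M \<otimes> (c P N \<otimes> idm P)"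
    proof -
      have "idm N \<otimes> ((idm M \<otimes> c P N) \<otimes> idm P) = idm N \<otimes> (idm M \<otimes> (c P N \<otimes> idm P))" 
        by (subst tar_assoc) (rule arr_rules a | simp add: ob)+
      also have "\<dots> = (idm N \<otimes> idm M) \<otimes> (c P N \<otimes> idm P)" by (rule tar_assoc[symmetric]) (rule arr_rules a | simp add: ob)+
      finally have "(c N M \<otimes> idm (N \<boxtimes> P \<boxtimes> P)) \<cdot> (idm N \<otimes> ((idm M \<otimes> c P N) \<otimes> idm P)) =
          (c N M \<otimes> idm (N \<boxtimes> P \<boxtimes> P)) \<cdot> (idm (N \<boxtimes> M) \<otimes> (c P N \<otimes> idm P))" using tar_id ob by simp
      also have "\<dots> = (c N M \<cdot> idm (N \<boxtimes> M)) \<otimes> (idm (N \<boxtimes> P \<boxtimes> P) \<cdot> (c P N \<otimes> idm P))"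
        by (rule interchange[symmetric]) (rule arr_rules a | simp add: ob)+
      also have "c N M \<cdot> idm (N \<boxtimes> M) = c N M" by (rule id_right) (rule arr_rules a | simp add: ob)+
      also have "idm (N \<boxtimes> P \<boxtimes> P) \<cdot> (c P N \<otimes> idm P) = c P N \<otimes> idm P" by (rule id_left) (rule arr_rules a | simp add: ob)+
      finally show ?thesis .
    qed
    finally show ?thesis .
  qed
  have WR: "?WR = idm M \<otimes> ((c N M \<otimes> (c P N \<otimes> idm P)) \<cdot> ((idm N \<otimes> c P M) \<otimes> idm (N \<boxtimes> P)))"
  proof -
    have k1: "idm (M \<boxtimes> M) \<otimes> ?K2 = idm M \<otimes> (idm (M \<boxtimes> N) \<otimes> (c P N \<otimes> idm P))"
    proof -
      have k2a: "?K2 = idm N \<otimes> (c P N \<otimes> idm P)" by (rule tar_assoc) (rule arr_rules a | simp add: ob)+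
      have k2b: "idm M \<otimes> (idm N \<otimes> (c P N \<otimes> idm P)) = (idm M \<otimes> idm N) \<otimes> (c P N \<otimes> idm P)" by (rule tar_assoc[symmetric]) (rule arr_rules a | simp add: ob)+
      have "idm (M \<boxtimes> M) \<otimes> ?K2 = (idm M \<otimes> idm M) \<otimes> ?K2" using tar_id ob by simp
      also have "\<dots> = idm M \<otimes> (idm M \<otimes> ?K2)" by (rule tar_assoc) (rule arr_rules a | simp add: ob)+
      finally show ?thesis using k2a k2b tar_id ob by simp
    qed
    have cp: "c (N \<boxtimes> P) M = (c N M \<otimes> idm P) \<cdot> (idm N \<otimes> c P M)" by (rule hex2) (simp_all add: ob)
    have k2: "(idm M \<otimes> c (N \<boxtimes> P) M) \<otimes> idm (N \<boxtimes> P) = idm M \<otimes> (c (N \<boxtimes> P) M \<otimes> idm (N \<boxtimes> P))"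
      by (rule tar_assoc) (rule arr_rules a | simp add: ob)+
    have "?WR = (idm M \<cdot> idm M) \<otimes> ((idm (M \<boxtimes> N) \<otimes> (c P N \<otimes> idm P)) \<cdot> (c (N \<boxtimes> P) M \<otimes> idm (N \<boxtimes> P)))"
      unfolding k1 k2 by (rule interchange[symmetric]) (rule arr_rules a | simp add: ob)+
    also have "idm M \<cdot> idm M = idm M" by (rule id_left) (rule arr_rules a | simp add: ob)+
    also have "c (N \<boxtimes> P) M \<otimes> idm (N \<boxtimes> P) = ((c N M \<otimes> idm P) \<otimes> idm (N \<boxtimes> P)) \<cdot> ((idm N \<otimes> c P M) \<otimes> idm (N \<boxtimes> P))"
    proof -
      have "c (N \<boxtimes> P) M \<otimes> idm (N \<boxtimes> P) = ((c N M \<otimes> idm P) \<cdot> (idm N \<otimes> c P M)) \<otimes> (idm (N \<boxtimes> P) \<cdot> idm (N \<boxtimes> P))"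
        using cp id_left[OF arr_id[of "N \<boxtimes> P"]] ob by simp
      also have "\<dots> = ((c N M \<otimes> idm P) \<otimes> idm (N \<boxtimes> P)) \<cdot> ((idm N \<otimes> c P M) \<otimes> idm (N \<boxtimes> P))"
        by (rule interchange) (rule arr_rules a | simp add: ob)+
      finally show ?thesis .
    qed
    also have "(idm (M \<boxtimes> N) \<otimes> (c P N \<otimes> idm P)) \<cdot> (((c N M \<otimes> idm P) \<otimes> idm (N \<boxtimes> P)) \<cdot> ((idm N \<otimes> c P M) \<otimes> idm (N \<boxtimes> P)))
       = ((idm (M \<boxtimes> N) \<otimes> (c P N \<otimes> idm P)) \<cdot> ((c N M \<otimes> idm P) \<otimes> idm (N \<boxtimes> P))) \<cdot> ((idm N \<otimes> c P M) \<otimes> idm (N \<boxtimes> P))"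
      by (rule cmp_assoc) (rule arr_rules a | simp add: ob)+
    also have "(idm (M \<boxtimes> N) \<otimes> (c P N \<otimes> idm P)) \<cdot> ((c N M \<otimes> idm P) \<otimes> idm (N \<boxtimes> P)) = c N M \<otimes> (c P N \<otimes> idm P)"
    proof -
      have "(c N M \<otimes> idm P) \<otimes> idm (N \<boxtimes> P) = c N M \<otimes> (idm P \<otimes> idm (N \<boxtimes> P))" by (rule tar_assoc) (rule arr_rules a | simp add: ob)+
      hence "(idm (M \<boxtimes> N) \<otimes> (c P N \<otimes> idm P)) \<cdot> ((c N M \<otimes> idm P) \<otimes> idm (N \<boxtimes> P)) =
          (idm (M \<boxtimes> N) \<otimes> (c P N \<otimes> idm P)) \<cdot> (c N M \<otimes> idm (P \<boxtimes> N \<boxtimes> P))" using tar_id ob by simp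
      also have "\<dots> = (idm (M \<boxtimes> N) \<cdot> c N M) \<otimes> ((c P N \<otimes> idm P) \<cdot> idm (P \<boxtimes> N \<boxtimes> P))"
        by (rule interchange[symmetric]) (rule arr_rules a | simp add: ob)+
      also have "idm (M \<boxtimes> N) \<cdot> c N M = c N M" by (rule id_left) (rule arr_rules a | simp add: ob)+
      also have "(c P N \<otimes> idm P) \<cdot> idm (P \<boxtimes> N \<boxtimes> P) = c P N \<otimes> idm P" by (rule id_right) (rule arr_rules a | simp add: ob)+
      finally show ?thesis .
    qed
    finally show ?thesis .
  qed
  have last: "idm N \<otimes> ((c P M \<otimes> idm N) \<otimes> idm P) = (idm N \<otimes> c P M) \<otimes> idm (N \<boxtimes> P)"
  proof -
    have "(c P M \<otimes> idm N) \<otimes> idm P = c P M \<otimes> (idm N \<otimes> idm P)" by (rule tar_assoc) (rule arr_rules a | simp add: ob)+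
    moreover have "(idm N \<otimes> c P M) \<otimes> (idm N \<otimes> idm P) = idm N \<otimes> (c P M \<otimes> (idm N \<otimes> idm P))" by (rule tar_assoc) (rule arr_rules a | simp add: ob)+
    ultimately show ?thesis using tar_id ob by simp
  qed
  show ?thesis using L R mnr WL WR last by simp
qed

end


context bmc begin

lemma id_hom: assumes "is_monoid V M mu eta" shows "monoid_hom V M mu eta M mu eta (idm M)"
proof -
  note m = mon[OF assms]
  have "idm M \<cdot> mu = mu" by (rule id_left[OF m(2)])
  moreover have "mu \<cdot> (idm M \<otimes> idm M) = mu" using tar_id m(1) id_right[OF m(2)] by simp
  moreover have "idm M \<cdot> eta = eta" by (rule id_left[OF m(3)])
  ultimately show ?thesis unfolding monoid_hom_def using arr_id[OF m(1)] arr_def by auto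
qed

lemma tm_I: assumes "arr mu (M \<boxtimes> M) M" shows "tmult V M mu I (idm I) = mu"
proof -
  have ob: "M \<in> ob V" using assms arrD by auto
  have "tmult V M mu I (idm I) = (mu \<otimes> idm I) \<cdot> ((idm M \<otimes> c I M) \<otimes> idm I)" unfolding tmult_def ..
  also have "\<dots> = mu \<cdot> (idm M \<otimes> idm M)" using br_IX ob tar_IR[OF assms] tar_IR[OF arr_tar[OF arr_id arr_id]] by simp
  also have "\<dots> = mu" using tar_id ob id_right[OF assms] by simp
  finally show ?thesis .
qed

lemma homD: "monoid_hom V M mu eta N nu th h \<Longrightarrow> M \<in> ob V \<Longrightarrow> N \<in> ob V \<Longrightarrow> arr h M N"
  "monoid_hom V M mu eta N nu th h \<Longrightarrow> h \<cdot> mu = nu \<cdot> (h \<otimes> h)"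
  "monoid_hom V M mu eta N nu th h \<Longrightarrow> h \<cdot> eta = th"
  unfolding monoid_hom_def arr_def by auto

lemma tm_hom:
  assumes f: "monoid_hom V M mu eta M' mu' eta' f" and g: "monoid_hom V N nu th N' nu' th' g"
    and ob: "M \<in> ob V" "N \<in> ob V" "M' \<in> ob V" "N' \<in> ob V"
    and a: "arr mu (M \<boxtimes> M) M" "arr nu (N \<boxtimes> N) N" "arr mu' (M' \<boxtimes> M') M'" "arr nu' (N' \<boxtimes> N') N'"
       "arr eta I M" "arr th I N"
  shows "monoid_hom V (M \<boxtimes> N) (tmult V M mu N nu) (eta \<otimes> th) (M' \<boxtimes> N') (tmult V M' mu' N' nu') (eta' \<otimes> th') (f \<otimes> g)"
proof -
  have fa: "arr f M M'" by (rule homD(1)[OF f ob(1,3)])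
  have ga: "arr g N N'" by (rule homD(1)[OF g ob(2,4)])
  let ?K = "(idm M \<otimes> c N M) \<otimes> idm N"
  let ?K' = "(idm M' \<otimes> c N' M') \<otimes> idm N'"
  let ?F = "(f \<otimes> g) \<otimes> (f \<otimes> g)"
  have nat: "((f \<otimes> f) \<otimes> (g \<otimes> g)) \<cdot> ?K = ?K' \<cdot> ?F"
  proof -
    have e1: "(f \<otimes> f) \<otimes> (g \<otimes> g) = f \<otimes> ((f \<otimes> g) \<otimes> g)"
    proof -
      have "(f \<otimes> f) \<otimes> (g \<otimes> g) = f \<otimes> (f \<otimes> (g \<otimes> g))" by (rule tar_assoc) (rule arr_rules a fa ga | simp add: ob)+
      also have "f \<otimes> (g \<otimes> g) = (f \<otimes> g) \<otimes> g" by (rule tar_assoc[symmetric]) (rule arr_rules a fa ga | simp add: ob)+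
      finally show ?thesis .
    qed
    have e2: "?K = idm M \<otimes> (c N M \<otimes> idm N)" by (rule tar_assoc) (rule arr_rules a fa ga | simp add: ob)+
    have e3: "?K' = idm M' \<otimes> (c N' M' \<otimes> idm N')" by (rule tar_assoc) (rule arr_rules a fa ga | simp add: ob)+
    have e4: "f \<otimes> ((g \<otimes> f) \<otimes> g) = ?F"
    proof -
      have "(g \<otimes> f) \<otimes> g = g \<otimes> (f \<otimes> g)" by (rule tar_assoc) (rule arr_rules a fa ga | simp add: ob)+
      moreover have "f \<otimes> (g \<otimes> (f \<otimes> g)) = ?F" by (rule tar_assoc[symmetric]) (rule arr_rules a fa ga | simp add: ob)+
      ultimately show ?thesis by simp
    qed
    have "((f \<otimes> f) \<otimes> (g \<otimes> g)) \<cdot> ?K = (f \<otimes> ((f \<otimes> g) \<otimes> g)) \<cdot> (idm M \<otimes> (c N M \<otimes> idm N))" using e1 e2 by simp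
    also have "\<dots> = (f \<cdot> idm M) \<otimes> (((f \<otimes> g) \<otimes> g) \<cdot> (c N M \<otimes> idm N))" by (rule interchange[symmetric]) (rule arr_rules a fa ga | simp add: ob)+
    also have "((f \<otimes> g) \<otimes> g) \<cdot> (c N M \<otimes> idm N) = ((f \<otimes> g) \<cdot> c N M) \<otimes> (g \<cdot> idm N)" by (rule interchange[symmetric]) (rule arr_rules a fa ga | simp add: ob)+
    also have "(f \<otimes> g) \<cdot> c N M = c N' M' \<cdot> (g \<otimes> f)" by (rule br_nat[symmetric]) (rule arr_rules a fa ga | simp add: ob)+
    also have "g \<cdot> idm N = idm N' \<cdot> g" using id_left[OF ga] id_right[OF ga] by simp
    also have "f \<cdot> idm M = idm M' \<cdot> f" using id_left[OF fa] id_right[OF fa] by simp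
    also have "(c N' M' \<cdot> (g \<otimes> f)) \<otimes> (idm N' \<cdot> g) = (c N' M' \<otimes> idm N') \<cdot> ((g \<otimes> f) \<otimes> g)" by (rule interchange) (rule arr_rules a fa ga | simp add: ob)+
    also have "(idm M' \<cdot> f) \<otimes> ((c N' M' \<otimes> idm N') \<cdot> ((g \<otimes> f) \<otimes> g)) = (idm M' \<otimes> (c N' M' \<otimes> idm N')) \<cdot> (f \<otimes> ((g \<otimes> f) \<otimes> g))"
      by (rule interchange) (rule arr_rules a fa ga | simp add: ob)+
    finally show ?thesis using e3 e4 by simp
  qed
  have "(f \<otimes> g) \<cdot> tmult V M mu N nu = ((f \<otimes> g) \<cdot> (mu \<otimes> nu)) \<cdot> ?K" unfolding tmult_def
    by (rule cmp_assoc) (rule arr_rules a fa ga | simp add: ob)+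
  also have "(f \<otimes> g) \<cdot> (mu \<otimes> nu) = (f \<cdot> mu) \<otimes> (g \<cdot> nu)" by (rule interchange[symmetric]) (rule arr_rules a fa ga | simp add: ob)+
  also have "f \<cdot> mu = mu' \<cdot> (f \<otimes> f)" by (rule homD(2)[OF f])
  also have "g \<cdot> nu = nu' \<cdot> (g \<otimes> g)" by (rule homD(2)[OF g])
  also have "(mu' \<cdot> (f \<otimes> f)) \<otimes> (nu' \<cdot> (g \<otimes> g)) = (mu' \<otimes> nu') \<cdot> ((f \<otimes> f) \<otimes> (g \<otimes> g))" by (rule interchange) (rule arr_rules a fa ga | simp add: ob)+
  also have "((mu' \<otimes> nu') \<cdot> ((f \<otimes> f) \<otimes> (g \<otimes> g))) \<cdot> ?K = (mu' \<otimes> nu') \<cdot> (((f \<otimes> f) \<otimes> (g \<otimes> g)) \<cdot> ?K)"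
    by (rule cmp_assoc[symmetric]) (rule arr_rules a fa ga | simp add: ob)+
  also note nat
  also have "(mu' \<otimes> nu') \<cdot> (?K' \<cdot> ?F) = tmult V M' mu' N' nu' \<cdot> ?F" unfolding tmult_def by (rule cmp_assoc) (rule arr_rules a fa ga | simp add: ob)+
  finally have m: "(f \<otimes> g) \<cdot> tmult V M mu N nu = tmult V M' mu' N' nu' \<cdot> ((f \<otimes> g) \<otimes> (f \<otimes> g))" .
  have "(f \<otimes> g) \<cdot> (eta \<otimes> th) = (f \<cdot> eta) \<otimes> (g \<cdot> th)" by (rule interchange[symmetric]) (rule arr_rules a fa ga | simp add: ob)+
  hence u: "(f \<otimes> g) \<cdot> (eta \<otimes> th) = eta' \<otimes> th'" using homD(3)[OF f] homD(3)[OF g] by simp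
  have "arr (f \<otimes> g) (M \<boxtimes> N) (M' \<boxtimes> N')" by (rule arr_rules a fa ga | simp add: ob)+
  thus ?thesis unfolding monoid_hom_def using m u arr_def by auto
qed

lemma dot_arr': "arr u X M \<Longrightarrow> arr v Y M \<Longrightarrow> arr mu Q M \<Longrightarrow> Q = M \<boxtimes> M \<Longrightarrow> P = X \<boxtimes> Y \<Longrightarrow> arr (dotp V mu u v) P M"
  unfolding dotp_def by (rule arr_rules | simp)+

lemma act:
  assumes M: "is_monoid V M mu eta" and N: "is_monoid V N nu th" and u: "arr u Y (M \<boxtimes> N)"
  shows "(mu \<otimes> idm N) \<cdot> (idm M \<otimes> u) = dotp V (tmult V M mu N nu) (idm M \<otimes> th) u"
proof -
  note m = mon[OF M] and n = mon[OF N]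
  note ob = m(1) n(1) arrD(1)[OF u]
  have ta: "arr (tmult V M mu N nu) (M \<boxtimes> N \<boxtimes> M \<boxtimes> N) (M \<boxtimes> N)" using tm_arr[OF m(2) n(2)] ob by simp
  have "dotp V (tmult V M mu N nu) (idm M \<otimes> th) u = tmult V M mu N nu \<cdot> (((idm M \<otimes> th) \<cdot> idm M) \<otimes> (idm (M \<boxtimes> N) \<cdot> u))"
    unfolding dotp_def using id_left[OF u] id_right[of "idm M \<otimes> th" M] arr_tar[OF arr_id[OF ob(1)] n(3)] ob by simp
  also have "((idm M \<otimes> th) \<cdot> idm M) \<otimes> (idm (M \<boxtimes> N) \<cdot> u) = ((idm M \<otimes> th) \<otimes> idm (M \<boxtimes> N)) \<cdot> (idm M \<otimes> u)"
    by (rule interchange) (rule arr_rules u m n | simp add: ob)+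
  also have "tmult V M mu N nu \<cdot> (((idm M \<otimes> th) \<otimes> idm (M \<boxtimes> N)) \<cdot> (idm M \<otimes> u)) = (tmult V M mu N nu \<cdot> ((idm M \<otimes> th) \<otimes> idm (M \<boxtimes> N))) \<cdot> (idm M \<otimes> u)"
    by (rule cmp_assoc) (rule arr_rules u m n ta | simp add: ob)+
  also have "tmult V M mu N nu \<cdot> ((idm M \<otimes> th) \<otimes> idm (M \<boxtimes> N)) = dotp V (tmult V M mu N nu) (idm M \<otimes> th) (idm M \<otimes> idm N)"
    unfolding dotp_def using tar_id ob by simp
  also have "\<dots> = dotp V mu (idm M) (idm M) \<otimes> dotp V nu th (idm N)"
    by (rule tm_dot[OF M N arr_id[OF m(1)] n(3) arr_id[OF m(1)] arr_id[OF n(1)]]) (simp add: ob br_IX)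
  also have "dotp V mu (idm M) (idm M) = mu" unfolding dotp_def using tar_id ob id_right[OF m(2)] by simp
  also have "dotp V nu th (idm N) = idm N" by (rule dot_uL[OF N arr_id[OF n(1)]])
  finally show ?thesis ..
qed

end



locale prob = bmc +
  fixes A B and muA etaA muB etaB dl ep gam tau
  assumes MA: "is_monoid V A muA etaA" and BIM: "is_bimonoid V B muB etaB dl ep"
    and TC: "twisted_coaction V A muA etaA B muB etaB dl ep gam tau"
begin

abbreviation "mAB \<equiv> tmult V A muA B muB"
abbreviation "mBB \<equiv> tmult V B muB B muB"
abbreviation "m3 \<equiv> tmult V (A \<boxtimes> B) mAB B muB"
abbreviation "m3' \<equiv> tmult V A muA (B \<boxtimes> B) mBB"
abbreviation "m4 \<equiv> tmult V (A \<boxtimes> B \<boxtimes> B) m3 B muB"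
abbreviation "m4' \<equiv> tmult V (A \<boxtimes> B) mAB (B \<boxtimes> B) mBB"

lemma MB: "is_monoid V B muB etaB" using BIM unfolding is_bimonoid_def by auto
lemma obA[simp]: "A \<in> ob V" using mon(1)[OF MA] .
lemma obB[simp]: "B \<in> ob V" using mon(1)[OF MB] .

lemma comon: "is_comonoid V B dl ep" using BIM unfolding is_bimonoid_def by auto
lemma dl_hom: "monoid_hom V B muB etaB (B \<boxtimes> B) mBB (etaB \<otimes> etaB) dl" using BIM unfolding is_bimonoid_def by auto
lemma ep_hom: "monoid_hom V B muB etaB I (idm I) (idm I) ep" using BIM unfolding is_bimonoid_def by auto
lemma dl_arr: "arr dl B (B \<boxtimes> B)" using comon unfolding is_comonoid_def arr_def by auto
lemma ep_arr: "arr ep B I" using comon unfolding is_comonoid_def arr_def by auto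
lemma dl_coassoc: "(dl \<otimes> idm B) \<cdot> dl = (idm B \<otimes> dl) \<cdot> dl" using comon unfolding is_comonoid_def by auto
lemma dl_counitL: "(ep \<otimes> idm B) \<cdot> dl = idm B" using comon unfolding is_comonoid_def by auto
lemma dl_counitR: "(idm B \<otimes> ep) \<cdot> dl = idm B" using comon unfolding is_comonoid_def by auto

lemma gam_hom: "monoid_hom V A muA etaA (A \<boxtimes> B) mAB (etaA \<otimes> etaB) gam"
  using TC unfolding twisted_coaction_def Let_def by auto
lemma gam_arr: "arr gam A (A \<boxtimes> B)" using homD(1)[OF gam_hom] by simp
lemma tau_arr: "arr tau I (A \<boxtimes> B \<boxtimes> B)" using TC unfolding twisted_coaction_def Let_def arr_def by simp
lemma counit: "(idm A \<otimes> ep) \<cdot> gam = idm A" using TC unfolding twisted_coaction_def Let_def by simp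
lemma tcoassoc: "dotp V m3 tau ((gam \<otimes> idm B) \<cdot> gam) = dotp V m3 ((idm A \<otimes> dl) \<cdot> gam) tau"
  using TC unfolding twisted_coaction_def Let_def by simp
lemma cocycle: "dotp V m4 (((idm A \<otimes> dl) \<otimes> idm B) \<cdot> tau) (tau \<otimes> etaB) =
    dotp V m4 ((idm (A \<boxtimes> B) \<otimes> dl) \<cdot> tau) ((gam \<otimes> idm (B \<boxtimes> B)) \<cdot> tau)"
  using TC unfolding twisted_coaction_def Let_def by simp
lemma norm1: "(idm (A \<boxtimes> B) \<otimes> ep) \<cdot> tau = etaA \<otimes> etaB"
  using TC unfolding twisted_coaction_def Let_def by simp
lemma norm2: "((idm A \<otimes> ep) \<otimes> idm B) \<cdot> tau = etaA \<otimes> etaB"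
  using TC unfolding twisted_coaction_def Let_def by simp

lemmas mA = mon[OF MA] and mB = mon[OF MB]

lemma MAB: "is_monoid V (A \<boxtimes> B) mAB (etaA \<otimes> etaB)" by (rule tm_monoid[OF MA MB])
lemma MBB: "is_monoid V (B \<boxtimes> B) mBB (etaB \<otimes> etaB)" by (rule tm_monoid[OF MB MB])
lemma M3: "is_monoid V (A \<boxtimes> B \<boxtimes> B) m3 ((etaA \<otimes> etaB) \<otimes> etaB)" using tm_monoid[OF MAB MB] by simp
lemma M3': "is_monoid V (A \<boxtimes> B \<boxtimes> B) m3' (etaA \<otimes> (etaB \<otimes> etaB))" using tm_monoid[OF MA MBB] by simp
lemma M4: "is_monoid V (A \<boxtimes> B \<boxtimes> B \<boxtimes> B) m4 (((etaA \<otimes> etaB) \<otimes> etaB) \<otimes> etaB)" using tm_monoid[OF M3 MB] by simp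
lemma M4': "is_monoid V (A \<boxtimes> B \<boxtimes> B \<boxtimes> B) m4' ((etaA \<otimes> etaB) \<otimes> (etaB \<otimes> etaB))" using tm_monoid[OF MAB MBB] by simp

lemma s3: "m3 = m3'" using tm_struct[OF obA obB obB mA(2) mB(2) mB(2)] .
lemma s4: "m4 = m4'" using tm_struct[OF _ obB obB mon(2)[OF MAB] mB(2) mB(2)] by simp

lemma arr_mAB: "arr mAB (A \<boxtimes> B \<boxtimes> A \<boxtimes> B) (A \<boxtimes> B)" using mon(2)[OF MAB] by simp
lemma arr_mBB: "arr mBB (B \<boxtimes> B \<boxtimes> B \<boxtimes> B) (B \<boxtimes> B)" using mon(2)[OF MBB] by simp
lemma arr_m3: "arr m3 (A \<boxtimes> B \<boxtimes> B \<boxtimes> A \<boxtimes> B \<boxtimes> B) (A \<boxtimes> B \<boxtimes> B)" using mon(2)[OF M3] by simp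
lemma arr_m3': "arr m3' (A \<boxtimes> B \<boxtimes> B \<boxtimes> A \<boxtimes> B \<boxtimes> B) (A \<boxtimes> B \<boxtimes> B)" using mon(2)[OF M3'] by simp
lemma arr_m4: "arr m4 (A \<boxtimes> B \<boxtimes> B \<boxtimes> B \<boxtimes> A \<boxtimes> B \<boxtimes> B \<boxtimes> B) (A \<boxtimes> B \<boxtimes> B \<boxtimes> B)" using mon(2)[OF M4] by simp
lemma arr_m4': "arr m4' (A \<boxtimes> B \<boxtimes> B \<boxtimes> B \<boxtimes> A \<boxtimes> B \<boxtimes> B \<boxtimes> B) (A \<boxtimes> B \<boxtimes> B \<boxtimes> B)" using mon(2)[OF M4'] by simp

lemmas ty = mA(2,3) mB(2,3) dl_arr ep_arr gam_arr tau_arr arr_mAB arr_mBB arr_m3 arr_m3' arr_m4 arr_m4'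
lemmas tyr = arr_rules dot_arr' ty

end



context bmc begin
lemma hom_dot':
  assumes h: "monoid_hom V M mu eta N nu th h" and M: "is_monoid V M mu eta'" and N: "is_monoid V N nu th'"
    and a: "arr u X M" "arr v Y M"
  shows "h \<cdot> dotp V mu u v = dotp V nu (h \<cdot> u) (h \<cdot> v)"
  by (rule hom_dot[OF h mon(1)[OF M] mon(1)[OF N] a mon(2)[OF M] mon(2)[OF N]])
end

context prob begin

abbreviation "z \<equiv> dotp V mAB (etaA \<otimes> idm B) gam"
abbreviation "d \<equiv> dotp V m3 (etaA \<otimes> dl) tau"
abbreviation "w \<equiv> etaA \<cdot> ep"

lemma z_arr: "arr z (B \<boxtimes> A) (A \<boxtimes> B)" by (rule tyr | simp)+
lemma d_arr: "arr d B (A \<boxtimes> B \<boxtimes> B)" by (rule tyr | simp)+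
lemma w_arr: "arr w B A" by (rule tyr | simp)+
lemma idI: "arr (idm I) (I \<boxtimes> I) I" using arr_id[of I] by simp

lemmas tyr2 = tyr z_arr d_arr w_arr

lemma H_epA: "monoid_hom V (A \<boxtimes> B) mAB (etaA \<otimes> etaB) A muA etaA (idm A \<otimes> ep)"
  using tm_hom[OF id_hom[OF MA] ep_hom obA obB obA ob_I mA(2) mB(2) mA(2) idI mA(3) mB(3)]
  by (simp add: tm_I[OF mA(2)] tar_IR[OF mA(3)])

lemma H_dl: "monoid_hom V (A \<boxtimes> B) mAB (etaA \<otimes> etaB) (A \<boxtimes> B \<boxtimes> B) m3 (etaA \<otimes> (etaB \<otimes> etaB)) (idm A \<otimes> dl)"
  using tm_hom[OF id_hom[OF MA] dl_hom obA obB obA _ mA(2) mB(2) mA(2) mon(2)[OF MBB] mA(3) mB(3)]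
  by (simp add: s3)

lemma H_gam1: "monoid_hom V (A \<boxtimes> B) mAB (etaA \<otimes> etaB) (A \<boxtimes> B \<boxtimes> B) m3 ((etaA \<otimes> etaB) \<otimes> etaB) (gam \<otimes> idm B)"
  using tm_hom[OF gam_hom id_hom[OF MB] obA obB _ obB mA(2) mB(2) mon(2)[OF MAB] mB(2) mA(3) mB(3)]
  by simp

lemma H_e1: "monoid_hom V (A \<boxtimes> B \<boxtimes> B) m3 ((etaA \<otimes> etaB) \<otimes> etaB) (A \<boxtimes> B) mAB (etaA \<otimes> etaB) ((idm A \<otimes> ep) \<otimes> idm B)"
  using tm_hom[OF H_epA id_hom[OF MB] _ obB obA obB mon(2)[OF MAB] mB(2) mA(2) mB(2) mon(3)[OF MAB] mB(3)]
  by simp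

lemma H_e2: "monoid_hom V (A \<boxtimes> B \<boxtimes> B) m3 ((etaA \<otimes> etaB) \<otimes> etaB) (A \<boxtimes> B) mAB (etaA \<otimes> etaB) (idm (A \<boxtimes> B) \<otimes> ep)"
  using tm_hom[OF id_hom[OF MAB] ep_hom _ obB _ ob_I mon(2)[OF MAB] mB(2) mon(2)[OF MAB] idI mon(3)[OF MAB] mB(3)]
  by (simp add: tm_I[OF mon(2)[OF MAB]] tar_IR[OF mon(3)[OF MAB]])

lemma H_dl1: "monoid_hom V (A \<boxtimes> B \<boxtimes> B) m3 ((etaA \<otimes> etaB) \<otimes> etaB) (A \<boxtimes> B \<boxtimes> B \<boxtimes> B) m4 ((etaA \<otimes> (etaB \<otimes> etaB)) \<otimes> etaB) ((idm A \<otimes> dl) \<otimes> idm B)"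
  using tm_hom[OF H_dl id_hom[OF MB] _ obB _ obB mon(2)[OF MAB] mB(2) mon(2)[OF M3] mB(2) mon(3)[OF MAB] mB(3)]
  by simp

lemma H_gam2: "monoid_hom V (A \<boxtimes> B \<boxtimes> B) m3' (etaA \<otimes> (etaB \<otimes> etaB)) (A \<boxtimes> B \<boxtimes> B \<boxtimes> B) m4' ((etaA \<otimes> etaB) \<otimes> (etaB \<otimes> etaB)) (gam \<otimes> idm (B \<boxtimes> B))"
  using tm_hom[OF gam_hom id_hom[OF MBB] obA _ _ _ mA(2) mon(2)[OF MBB] mon(2)[OF MAB] mon(2)[OF MBB] mA(3) mon(3)[OF MBB]]
  by simp

lemma H_dl2: "monoid_hom V (A \<boxtimes> B \<boxtimes> B) m3 ((etaA \<otimes> etaB) \<otimes> etaB) (A \<boxtimes> B \<boxtimes> B \<boxtimes> B) m4 ((etaA \<otimes> etaB) \<otimes> (etaB \<otimes> etaB)) (idm (A \<boxtimes> B) \<otimes> dl)"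
  using tm_hom[OF id_hom[OF MAB] dl_hom _ obB _ _ mon(2)[OF MAB] mB(2) mon(2)[OF MAB] mon(2)[OF MBB] mon(3)[OF MAB] mB(3)]
  by (simp add: s4)

end


context prob begin

lemma eBB: "arr (etaB \<otimes> etaB) I (B \<boxtimes> B)" using arr_tar[OF mB(3) mB(3)] by simp

lemma Qlem: "(muA \<otimes> idm B) \<cdot> (idm A \<otimes> z) = dotp V mAB (idm (A \<boxtimes> B)) gam"
proof -
  have "(muA \<otimes> idm B) \<cdot> (idm A \<otimes> z) = dotp V mAB (idm A \<otimes> etaB) z" by (rule act[OF MA MB z_arr])
  also have "\<dots> = dotp V mAB (dotp V mAB (idm A \<otimes> etaB) (etaA \<otimes> idm B)) gam" by (rule dot_assoc[OF MAB, symmetric]) (rule tyr2 eBB | simp)+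
  also have "dotp V mAB (idm A \<otimes> etaB) (etaA \<otimes> idm B) = dotp V muA (idm A) etaA \<otimes> dotp V muB etaB (idm B)"
    by (rule tm_dot[OF MA MB arr_id[OF obA] mB(3) mA(3) arr_id[OF obB]]) (simp add: br_IX)
  also have "dotp V muA (idm A) etaA = idm A" by (rule dot_uR[OF MA arr_id[OF obA]])
  also have "dotp V muB etaB (idm B) = idm B" by (rule dot_uL[OF MB arr_id[OF obB]])
  finally show ?thesis using tar_id by simp
qed

lemma Plem: "(muA \<otimes> idm (B \<boxtimes> B)) \<cdot> (idm A \<otimes> d) = dotp V m3 (idm A \<otimes> dl) tau"
proof -
  have "(muA \<otimes> idm (B \<boxtimes> B)) \<cdot> (idm A \<otimes> d) = dotp V m3' (idm A \<otimes> (etaB \<otimes> etaB)) d" by (rule act[OF MA MBB d_arr])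
  also have "d = dotp V m3' (etaA \<otimes> dl) tau" using s3 by simp
  also have "dotp V m3' (idm A \<otimes> (etaB \<otimes> etaB)) (dotp V m3' (etaA \<otimes> dl) tau) = dotp V m3' (dotp V m3' (idm A \<otimes> (etaB \<otimes> etaB)) (etaA \<otimes> dl)) tau"
    by (rule dot_assoc[OF M3', symmetric]) (rule tyr2 eBB | simp)+
  also have "dotp V m3' (idm A \<otimes> (etaB \<otimes> etaB)) (etaA \<otimes> dl) = dotp V muA (idm A) etaA \<otimes> dotp V mBB (etaB \<otimes> etaB) dl"
    by (rule tm_dot[OF MA MBB arr_id[OF obA] eBB mA(3) dl_arr]) (simp add: br_IX)
  also have "dotp V muA (idm A) etaA = idm A" by (rule dot_uR[OF MA arr_id[OF obA]])
  also have "dotp V mBB (etaB \<otimes> etaB) dl = dl" by (rule dot_uL[OF MBB dl_arr])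
  finally show ?thesis using s3 by simp
qed

lemma ax1: "z \<cdot> (idm B \<otimes> muA) = (muA \<otimes> idm B) \<cdot> ((idm A \<otimes> z) \<cdot> (z \<otimes> idm A))"
proof -
  have "z \<cdot> (idm B \<otimes> muA) = dotp V mAB ((etaA \<otimes> idm B) \<cdot> idm B) (gam \<cdot> muA)"
    by (rule dot_pre) (rule tyr2 eBB | simp)+
  also have "(etaA \<otimes> idm B) \<cdot> idm B = etaA \<otimes> idm B" by (rule id_right) (rule tyr2 eBB | simp)+
  also have "gam \<cdot> muA = dotp V mAB gam gam" unfolding dotp_def by (rule homD(2)[OF gam_hom])
  finally have L: "z \<cdot> (idm B \<otimes> muA) = dotp V mAB (etaA \<otimes> idm B) (dotp V mAB gam gam)" .
  have "(muA \<otimes> idm B) \<cdot> ((idm A \<otimes> z) \<cdot> (z \<otimes> idm A)) = ((muA \<otimes> idm B) \<cdot> (idm A \<otimes> z)) \<cdot> (z \<otimes> idm A)"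
    by (rule cmp_assoc) (rule tyr2 eBB | simp)+
  also have "\<dots> = dotp V mAB (idm (A \<boxtimes> B)) gam \<cdot> (z \<otimes> idm A)" by (simp add: Qlem)
  also have "\<dots> = dotp V mAB (idm (A \<boxtimes> B) \<cdot> z) (gam \<cdot> idm A)" by (rule dot_pre) (rule tyr2 eBB | simp)+
  also have "idm (A \<boxtimes> B) \<cdot> z = z" by (rule id_left) (rule tyr2 eBB | simp)+
  also have "gam \<cdot> idm A = gam" by (rule id_right) (rule tyr2 eBB | simp)+
  also have "dotp V mAB z gam = dotp V mAB (etaA \<otimes> idm B) (dotp V mAB gam gam)" by (rule dot_assoc[OF MAB]) (rule tyr2 eBB | simp)+
  finally show ?thesis using L by simp
qed

lemma ax2: "z \<cdot> (idm B \<otimes> etaA) = etaA \<otimes> idm B"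
proof -
  have "z \<cdot> (idm B \<otimes> etaA) = dotp V mAB ((etaA \<otimes> idm B) \<cdot> idm B) (gam \<cdot> etaA)"
    by (rule dot_pre) (rule tyr2 eBB | simp)+
  also have "(etaA \<otimes> idm B) \<cdot> idm B = etaA \<otimes> idm B" by (rule id_right) (rule tyr2 eBB | simp)+
  also have "gam \<cdot> etaA = etaA \<otimes> etaB" by (rule homD(3)[OF gam_hom])
  also have "dotp V mAB (etaA \<otimes> idm B) (etaA \<otimes> etaB) = etaA \<otimes> idm B" by (rule dot_uR[OF MAB]) (rule tyr2 eBB | simp)+
  finally show ?thesis .
qed

lemma Wlem: "muA \<cdot> (idm A \<otimes> w) = idm A \<otimes> ep"
proof -
  have "idm A \<otimes> w = (idm A \<cdot> idm A) \<otimes> (etaA \<cdot> ep)" using id_left[OF arr_id[OF obA]] by simp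
  also have "\<dots> = (idm A \<otimes> etaA) \<cdot> (idm A \<otimes> ep)" by (rule interchange) (rule tyr2 eBB | simp)+
  also have "muA \<cdot> ((idm A \<otimes> etaA) \<cdot> (idm A \<otimes> ep)) = (muA \<cdot> (idm A \<otimes> etaA)) \<cdot> (idm A \<otimes> ep)" by (rule cmp_assoc) (rule tyr2 eBB | simp)+
  also have "muA \<cdot> (idm A \<otimes> etaA) = idm A" by (rule mA(6))
  also have "idm A \<cdot> (idm A \<otimes> ep) = idm A \<otimes> ep" by (rule id_left) (rule tyr2 eBB | simp)+
  finally show ?thesis .
qed

lemma Wlem2: "etaA \<otimes> ep = w"
proof -
  have "etaA \<otimes> ep = (etaA \<cdot> idm I) \<otimes> (idm I \<cdot> ep)" using id_left[OF ep_arr] id_right[OF mA(3)] by simp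
  also have "\<dots> = (etaA \<otimes> idm I) \<cdot> (idm I \<otimes> ep)" by (rule interchange) (rule tyr2 eBB | simp)+
  finally show ?thesis using tar_IR[OF mA(3)] tar_IL[OF ep_arr] by simp
qed

lemma ax3: "muA \<cdot> (w \<otimes> idm A) = muA \<cdot> ((idm A \<otimes> w) \<cdot> z)"
proof -
  have "muA \<cdot> ((idm A \<otimes> w) \<cdot> z) = (muA \<cdot> (idm A \<otimes> w)) \<cdot> z" by (rule cmp_assoc) (rule tyr2 eBB | simp)+
  also have "\<dots> = (idm A \<otimes> ep) \<cdot> z" by (simp add: Wlem)
  also have "\<dots> = dotp V muA ((idm A \<otimes> ep) \<cdot> (etaA \<otimes> idm B)) ((idm A \<otimes> ep) \<cdot> gam)"
    by (rule hom_dot'[OF H_epA MAB MA]) (rule tyr2 eBB | simp)+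
  also have "(idm A \<otimes> ep) \<cdot> gam = idm A" by (rule counit)
  also have "(idm A \<otimes> ep) \<cdot> (etaA \<otimes> idm B) = (idm A \<cdot> etaA) \<otimes> (ep \<cdot> idm B)" by (rule interchange[symmetric]) (rule tyr2 eBB | simp)+
  also have "idm A \<cdot> etaA = etaA" by (rule id_left) (rule tyr2 eBB | simp)+
  also have "ep \<cdot> idm B = ep" by (rule id_right) (rule tyr2 eBB | simp)+
  finally show ?thesis using Wlem2 unfolding dotp_def by simp
qed

lemma ax6: "(muA \<otimes> idm B) \<cdot> (((idm A \<otimes> w) \<otimes> idm B) \<cdot> d) = etaA \<otimes> idm B"
proof -
  have "(muA \<otimes> idm B) \<cdot> (((idm A \<otimes> w) \<otimes> idm B) \<cdot> d) = ((muA \<otimes> idm B) \<cdot> ((idm A \<otimes> w) \<otimes> idm B)) \<cdot> d"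
    by (rule cmp_assoc) (rule tyr2 eBB | simp)+
  also have "(muA \<otimes> idm B) \<cdot> ((idm A \<otimes> w) \<otimes> idm B) = (muA \<cdot> (idm A \<otimes> w)) \<otimes> (idm B \<cdot> idm B)"
    by (rule interchange[symmetric]) (rule tyr2 eBB | simp)+
  also have "idm B \<cdot> idm B = idm B" by (rule id_left) (rule tyr2 eBB | simp)+
  also note Wlem
  also have "((idm A \<otimes> ep) \<otimes> idm B) \<cdot> d = dotp V mAB (((idm A \<otimes> ep) \<otimes> idm B) \<cdot> (etaA \<otimes> dl)) (((idm A \<otimes> ep) \<otimes> idm B) \<cdot> tau)"
    by (rule hom_dot'[OF H_e1 M3 MAB]) (rule tyr2 eBB | simp)+
  also have "((idm A \<otimes> ep) \<otimes> idm B) \<cdot> tau = etaA \<otimes> etaB" by (rule norm2)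
  also have "((idm A \<otimes> ep) \<otimes> idm B) \<cdot> (etaA \<otimes> dl) = etaA \<otimes> idm B"
  proof -
    have "(idm A \<otimes> ep) \<otimes> idm B = idm A \<otimes> (ep \<otimes> idm B)" by (rule tar_assoc) (rule tyr2 eBB | simp)+
    moreover have "(idm A \<otimes> (ep \<otimes> idm B)) \<cdot> (etaA \<otimes> dl) = (idm A \<cdot> etaA) \<otimes> ((ep \<otimes> idm B) \<cdot> dl)" by (rule interchange[symmetric]) (rule tyr2 eBB | simp)+
    moreover have "idm A \<cdot> etaA = etaA" by (rule id_left) (rule tyr2 eBB | simp)+
    ultimately show ?thesis using dl_counitL by simp
  qed
  also have "dotp V mAB (etaA \<otimes> idm B) (etaA \<otimes> etaB) = etaA \<otimes> idm B" by (rule dot_uR[OF MAB]) (rule tyr2 eBB | simp)+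
  finally show ?thesis .
qed

lemma ax7: "(muA \<otimes> idm B) \<cdot> ((idm A \<otimes> z) \<cdot> (((idm A \<otimes> idm B) \<otimes> w) \<cdot> d)) = etaA \<otimes> idm B"
proof -
  have "(muA \<otimes> idm B) \<cdot> ((idm A \<otimes> z) \<cdot> (((idm A \<otimes> idm B) \<otimes> w) \<cdot> d)) = ((muA \<otimes> idm B) \<cdot> (idm A \<otimes> z)) \<cdot> (((idm A \<otimes> idm B) \<otimes> w) \<cdot> d)"
    by (rule cmp_assoc) (rule tyr2 eBB | simp)+
  also have "\<dots> = (((muA \<otimes> idm B) \<cdot> (idm A \<otimes> z)) \<cdot> ((idm A \<otimes> idm B) \<otimes> w)) \<cdot> d"
    by (rule cmp_assoc) (rule tyr2 eBB | simp)+
  also have "((muA \<otimes> idm B) \<cdot> (idm A \<otimes> z)) \<cdot> ((idm A \<otimes> idm B) \<otimes> w) = idm (A \<boxtimes> B) \<otimes> ep"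
  proof -
    have "((muA \<otimes> idm B) \<cdot> (idm A \<otimes> z)) \<cdot> ((idm A \<otimes> idm B) \<otimes> w) = dotp V mAB (idm (A \<boxtimes> B)) gam \<cdot> (idm (A \<boxtimes> B) \<otimes> w)"
      using Qlem tar_id by simp
    also have "\<dots> = dotp V mAB (idm (A \<boxtimes> B) \<cdot> idm (A \<boxtimes> B)) (gam \<cdot> w)" by (rule dot_pre) (rule tyr2 eBB | simp)+
    also have "gam \<cdot> w = (gam \<cdot> etaA) \<cdot> ep" by (rule cmp_assoc) (rule tyr2 eBB | simp)+
    also have "gam \<cdot> etaA = etaA \<otimes> etaB" by (rule homD(3)[OF gam_hom])
    also have "dotp V mAB (idm (A \<boxtimes> B) \<cdot> idm (A \<boxtimes> B)) ((etaA \<otimes> etaB) \<cdot> ep) = dotp V mAB (idm (A \<boxtimes> B)) (etaA \<otimes> etaB) \<cdot> (idm (A \<boxtimes> B) \<otimes> ep)"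
      by (rule dot_pre[symmetric]) (rule tyr2 eBB | simp)+
    also have "dotp V mAB (idm (A \<boxtimes> B)) (etaA \<otimes> etaB) = idm (A \<boxtimes> B)" by (rule dot_uR[OF MAB]) (rule tyr2 eBB | simp)+
    also have "idm (A \<boxtimes> B) \<cdot> (idm (A \<boxtimes> B) \<otimes> ep) = idm (A \<boxtimes> B) \<otimes> ep" by (rule id_left) (rule tyr2 eBB | simp)+
    finally show ?thesis .
  qed
  also have "(idm (A \<boxtimes> B) \<otimes> ep) \<cdot> d = dotp V mAB ((idm (A \<boxtimes> B) \<otimes> ep) \<cdot> (etaA \<otimes> dl)) ((idm (A \<boxtimes> B) \<otimes> ep) \<cdot> tau)"
    by (rule hom_dot'[OF H_e2 M3 MAB]) (rule tyr2 eBB | simp)+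
  also have "(idm (A \<boxtimes> B) \<otimes> ep) \<cdot> tau = etaA \<otimes> etaB" by (rule norm1)
  also have "(idm (A \<boxtimes> B) \<otimes> ep) \<cdot> (etaA \<otimes> dl) = etaA \<otimes> idm B"
  proof -
    have "idm (A \<boxtimes> B) \<otimes> ep = (idm A \<otimes> idm B) \<otimes> ep" using tar_id by simp
    also have "\<dots> = idm A \<otimes> (idm B \<otimes> ep)" by (rule tar_assoc) (rule tyr2 eBB | simp)+
    finally have "(idm (A \<boxtimes> B) \<otimes> ep) \<cdot> (etaA \<otimes> dl) = (idm A \<otimes> (idm B \<otimes> ep)) \<cdot> (etaA \<otimes> dl)" by simp
    also have "\<dots> = (idm A \<cdot> etaA) \<otimes> ((idm B \<otimes> ep) \<cdot> dl)" by (rule interchange[symmetric]) (rule tyr2 eBB | simp)+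
    also have "idm A \<cdot> etaA = etaA" by (rule id_left) (rule tyr2 eBB | simp)+
    finally show ?thesis using dl_counitR by simp
  qed
  also have "dotp V mAB (etaA \<otimes> idm B) (etaA \<otimes> etaB) = etaA \<otimes> idm B" by (rule dot_uR[OF MAB]) (rule tyr2 eBB | simp)+
  finally show ?thesis .
qed

end


context prob begin

lemma eAB: "arr (etaA \<otimes> etaB) I (A \<boxtimes> B)" using arr_tar[OF mA(3) mB(3)] by simp
lemma idAB: "arr (idm (A \<boxtimes> B)) (A \<boxtimes> B) (A \<boxtimes> B)" by (rule arr_id) simp
lemma idBB: "arr (idm (B \<boxtimes> B)) (B \<boxtimes> B) (B \<boxtimes> B)" by (rule arr_id) simp

abbreviation "G \<equiv> (gam \<otimes> idm B) \<cdot> gam"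

lemma ax4: "(muA \<otimes> idm (B \<boxtimes> B)) \<cdot> (((idm A \<otimes> z) \<otimes> idm B) \<cdot> (((idm A \<otimes> idm B) \<otimes> z) \<cdot> (d \<otimes> idm A))) =
    (muA \<otimes> idm (B \<boxtimes> B)) \<cdot> ((idm A \<otimes> d) \<cdot> z)"
proof -
  have R: "(muA \<otimes> idm (B \<boxtimes> B)) \<cdot> ((idm A \<otimes> d) \<cdot> z) = dotp V m3 d G"
  proof -
    have "(muA \<otimes> idm (B \<boxtimes> B)) \<cdot> ((idm A \<otimes> d) \<cdot> z) = ((muA \<otimes> idm (B \<boxtimes> B)) \<cdot> (idm A \<otimes> d)) \<cdot> (z \<otimes> idm I)"
      using cmp_assoc[of z] tar_IR[OF z_arr] by (subst cmp_assoc) (rule tyr2 eBB | simp)+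
    also have "\<dots> = dotp V m3 (idm A \<otimes> dl) tau \<cdot> (z \<otimes> idm I)" by (simp add: Plem)
    also have "\<dots> = dotp V m3 ((idm A \<otimes> dl) \<cdot> z) (tau \<cdot> idm I)" by (rule dot_pre) (rule tyr2 eBB | simp)+
    also have "tau \<cdot> idm I = tau" by (rule id_right) (rule tyr2 eBB | simp)+
    also have "(idm A \<otimes> dl) \<cdot> z = dotp V m3 ((idm A \<otimes> dl) \<cdot> (etaA \<otimes> idm B)) ((idm A \<otimes> dl) \<cdot> gam)"
      by (rule hom_dot'[OF H_dl MAB M3]) (rule tyr2 eBB | simp)+
    also have "(idm A \<otimes> dl) \<cdot> (etaA \<otimes> idm B) = (idm A \<cdot> etaA) \<otimes> (dl \<cdot> idm B)" by (rule interchange[symmetric]) (rule tyr2 eBB | simp)+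
    also have "idm A \<cdot> etaA = etaA" by (rule id_left) (rule tyr2 eBB | simp)+
    also have "dl \<cdot> idm B = dl" by (rule id_right) (rule tyr2 eBB | simp)+
    also have "dotp V m3 (dotp V m3 (etaA \<otimes> dl) ((idm A \<otimes> dl) \<cdot> gam)) tau = dotp V m3 (etaA \<otimes> dl) (dotp V m3 ((idm A \<otimes> dl) \<cdot> gam) tau)"
      by (rule dot_assoc[OF M3]) (rule tyr2 eBB | simp)+
    also have "dotp V m3 ((idm A \<otimes> dl) \<cdot> gam) tau = dotp V m3 tau G" by (rule tcoassoc[symmetric])
    also have "dotp V m3 (etaA \<otimes> dl) (dotp V m3 tau G) = dotp V m3 d G" by (rule dot_assoc[OF M3, symmetric]) (rule tyr2 eBB | simp)+
    finally show ?thesis .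
  qed
  have Phi: "((muA \<otimes> idm (B \<boxtimes> B)) \<cdot> ((idm A \<otimes> z) \<otimes> idm B)) \<cdot> ((idm A \<otimes> idm B) \<otimes> z) = dotp V m3 (idm (A \<boxtimes> B \<boxtimes> B)) G"
  proof -
    have "muA \<otimes> idm (B \<boxtimes> B) = muA \<otimes> (idm B \<otimes> idm B)" using tar_id by simp
    also have "\<dots> = (muA \<otimes> idm B) \<otimes> idm B" by (rule tar_assoc[symmetric]) (rule tyr2 eBB | simp)+
    finally have "(muA \<otimes> idm (B \<boxtimes> B)) \<cdot> ((idm A \<otimes> z) \<otimes> idm B) = ((muA \<otimes> idm B) \<otimes> idm B) \<cdot> ((idm A \<otimes> z) \<otimes> idm B)" by simp
    also have "\<dots> = ((muA \<otimes> idm B) \<cdot> (idm A \<otimes> z)) \<otimes> (idm B \<cdot> idm B)" by (rule interchange[symmetric]) (rule tyr2 eBB | simp)+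
    also have "idm B \<cdot> idm B = idm B" by (rule id_left) (rule tyr2 eBB | simp)+
    also note Qlem
    also have "dotp V mAB (idm (A \<boxtimes> B)) gam \<otimes> idm B = dotp V m3 (idm (A \<boxtimes> B) \<otimes> etaB) (gam \<otimes> idm B)"
    proof -
      have "dotp V m3 (idm (A \<boxtimes> B) \<otimes> etaB) (gam \<otimes> idm B) = dotp V mAB (idm (A \<boxtimes> B)) gam \<otimes> dotp V muB etaB (idm B)"
        by (rule tm_dot[OF MAB MB idAB mB(3) gam_arr arr_id[OF obB]]) (simp add: br_IX)
      thus ?thesis using dot_uL[OF MB arr_id[OF obB]] by simp
    qed
    finally have PQ: "(muA \<otimes> idm (B \<boxtimes> B)) \<cdot> ((idm A \<otimes> z) \<otimes> idm B) = dotp V m3 (idm (A \<boxtimes> B) \<otimes> etaB) (gam \<otimes> idm B)" .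
    have "((muA \<otimes> idm (B \<boxtimes> B)) \<cdot> ((idm A \<otimes> z) \<otimes> idm B)) \<cdot> ((idm A \<otimes> idm B) \<otimes> z) = dotp V m3 (idm (A \<boxtimes> B) \<otimes> etaB) (gam \<otimes> idm B) \<cdot> (idm (A \<boxtimes> B) \<otimes> z)"
      using PQ tar_id by simp
    also have "dotp V m3 (idm (A \<boxtimes> B) \<otimes> etaB) (gam \<otimes> idm B) \<cdot> (idm (A \<boxtimes> B) \<otimes> z) = 
        dotp V m3 ((idm (A \<boxtimes> B) \<otimes> etaB) \<cdot> idm (A \<boxtimes> B)) ((gam \<otimes> idm B) \<cdot> z)" by (rule dot_pre) (rule tyr2 eBB | simp)+
    also have "(idm (A \<boxtimes> B) \<otimes> etaB) \<cdot> idm (A \<boxtimes> B) = idm (A \<boxtimes> B) \<otimes> etaB" using id_right[OF arr_tar[OF idAB mB(3)]] by simp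
    also have "(gam \<otimes> idm B) \<cdot> z = dotp V m3 ((gam \<otimes> idm B) \<cdot> (etaA \<otimes> idm B)) G"
      by (rule hom_dot'[OF H_gam1 MAB M3]) (rule tyr2 eBB | simp)+
    also have "(gam \<otimes> idm B) \<cdot> (etaA \<otimes> idm B) = (gam \<cdot> etaA) \<otimes> (idm B \<cdot> idm B)" by (rule interchange[symmetric]) (rule tyr2 eBB | simp)+
    also have "gam \<cdot> etaA = etaA \<otimes> etaB" by (rule homD(3)[OF gam_hom])
    also have "idm B \<cdot> idm B = idm B" by (rule id_left) (rule tyr2 eBB | simp)+
    also have "dotp V m3 (idm (A \<boxtimes> B) \<otimes> etaB) (dotp V m3 ((etaA \<otimes> etaB) \<otimes> idm B) G) = dotp V m3 (dotp V m3 (idm (A \<boxtimes> B) \<otimes> etaB) ((etaA \<otimes> etaB) \<otimes> idm B)) G"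
      by (rule dot_assoc[OF M3, symmetric]) (rule tyr2 eAB idAB | simp)+
    also have "dotp V m3 (idm (A \<boxtimes> B) \<otimes> etaB) ((etaA \<otimes> etaB) \<otimes> idm B) = dotp V mAB (idm (A \<boxtimes> B)) (etaA \<otimes> etaB) \<otimes> dotp V muB etaB (idm B)"
      by (rule tm_dot[OF MAB MB idAB mB(3) eAB arr_id[OF obB]]) (simp add: br_IX)
    also have "dotp V mAB (idm (A \<boxtimes> B)) (etaA \<otimes> etaB) = idm (A \<boxtimes> B)" by (rule dot_uR[OF MAB idAB])
    also have "dotp V muB etaB (idm B) = idm B" by (rule dot_uL[OF MB arr_id[OF obB]])
    also have "idm (A \<boxtimes> B) \<otimes> idm B = idm (A \<boxtimes> B \<boxtimes> B)" using tar_id[of "A \<boxtimes> B" B] by simp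
    finally show ?thesis .
  qed
  have "(muA \<otimes> idm (B \<boxtimes> B)) \<cdot> (((idm A \<otimes> z) \<otimes> idm B) \<cdot> (((idm A \<otimes> idm B) \<otimes> z) \<cdot> (d \<otimes> idm A))) =
     ((muA \<otimes> idm (B \<boxtimes> B)) \<cdot> ((idm A \<otimes> z) \<otimes> idm B)) \<cdot> (((idm A \<otimes> idm B) \<otimes> z) \<cdot> (d \<otimes> idm A))" by (rule cmp_assoc) (rule tyr2 eBB | simp)+
  also have "\<dots> = (((muA \<otimes> idm (B \<boxtimes> B)) \<cdot> ((idm A \<otimes> z) \<otimes> idm B)) \<cdot> ((idm A \<otimes> idm B) \<otimes> z)) \<cdot> (d \<otimes> idm A)"
    by (rule cmp_assoc) (rule tyr2 eBB | simp)+
  also note Phi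
  also have "dotp V m3 (idm (A \<boxtimes> B \<boxtimes> B)) G \<cdot> (d \<otimes> idm A) = dotp V m3 (idm (A \<boxtimes> B \<boxtimes> B) \<cdot> d) (G \<cdot> idm A)"
    by (rule dot_pre) (rule tyr2 eBB | simp)+
  also have "idm (A \<boxtimes> B \<boxtimes> B) \<cdot> d = d" by (rule id_left) (rule tyr2 eBB | simp)+
  also have "G \<cdot> idm A = G" by (rule id_right) (rule tyr2 eBB | simp)+
  finally show ?thesis using R by simp
qed

end


context prob begin

lemma idA_dl: "arr (idm A \<otimes> dl) (A \<boxtimes> B) (A \<boxtimes> B \<boxtimes> B)" using arr_tar[OF arr_id[OF obA] dl_arr] by simp

lemma ax5: "(muA \<otimes> idm (B \<boxtimes> B \<boxtimes> B)) \<cdot> (((idm A \<otimes> d) \<otimes> idm B) \<cdot> d) =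
   (muA \<otimes> idm (B \<boxtimes> B \<boxtimes> B)) \<cdot> (((idm A \<otimes> z) \<otimes> idm (B \<boxtimes> B)) \<cdot> (((idm A \<otimes> idm B) \<otimes> d) \<cdot> d))"
proof -
  let ?F1 = "(idm A \<otimes> dl) \<otimes> idm B"
  let ?X = "?F1 \<cdot> tau"
  let ?Y = "(idm (A \<boxtimes> B) \<otimes> dl) \<cdot> tau"
  let ?T = "(gam \<otimes> idm (B \<boxtimes> B)) \<cdot> tau"
  have L: "(muA \<otimes> idm (B \<boxtimes> B \<boxtimes> B)) \<cdot> (((idm A \<otimes> d) \<otimes> idm B) \<cdot> d) =
      dotp V m4 (etaA \<otimes> ((dl \<otimes> idm B) \<cdot> dl)) (dotp V m4 ?X (tau \<otimes> etaB))"
  proof -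
    have "muA \<otimes> idm (B \<boxtimes> B \<boxtimes> B) = muA \<otimes> (idm (B \<boxtimes> B) \<otimes> idm B)" using tar_id[of "B \<boxtimes> B" B] by simp
    also have "\<dots> = (muA \<otimes> idm (B \<boxtimes> B)) \<otimes> idm B" by (rule tar_assoc[symmetric]) (rule tyr2 eBB | simp)+
    finally have "(muA \<otimes> idm (B \<boxtimes> B \<boxtimes> B)) \<cdot> ((idm A \<otimes> d) \<otimes> idm B) = ((muA \<otimes> idm (B \<boxtimes> B)) \<otimes> idm B) \<cdot> ((idm A \<otimes> d) \<otimes> idm B)" by simp
    also have "\<dots> = ((muA \<otimes> idm (B \<boxtimes> B)) \<cdot> (idm A \<otimes> d)) \<otimes> (idm B \<cdot> idm B)" by (rule interchange[symmetric]) (rule tyr2 eBB | simp)+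
    also have "idm B \<cdot> idm B = idm B" by (rule id_left) (rule tyr2 eBB | simp)+
    also note Plem
    also have "dotp V m3 (idm A \<otimes> dl) tau \<otimes> idm B = dotp V m4 ?F1 (tau \<otimes> etaB)"
    proof -
      have "dotp V m4 ?F1 (tau \<otimes> etaB) = dotp V m3 (idm A \<otimes> dl) tau \<otimes> dotp V muB (idm B) etaB"
        by (rule tm_dot[OF M3 MB idA_dl arr_id[OF obB] tau_arr mB(3)]) (simp add: br_XI)
      thus ?thesis using dot_uR[OF MB arr_id[OF obB]] by simp
    qed
    finally have S1: "(muA \<otimes> idm (B \<boxtimes> B \<boxtimes> B)) \<cdot> ((idm A \<otimes> d) \<otimes> idm B) = dotp V m4 ?F1 (tau \<otimes> etaB)" .
    have "(muA \<otimes> idm (B \<boxtimes> B \<boxtimes> B)) \<cdot> (((idm A \<otimes> d) \<otimes> idm B) \<cdot> d) = ((muA \<otimes> idm (B \<boxtimes> B \<boxtimes> B)) \<cdot> ((idm A \<otimes> d) \<otimes> idm B)) \<cdot> (d \<otimes> idm I)"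
      using tar_IR[OF d_arr] by (subst cmp_assoc) (rule tyr2 eBB | simp)+
    also have "\<dots> = dotp V m4 ?F1 (tau \<otimes> etaB) \<cdot> (d \<otimes> idm I)" using S1 by simp
    also have "\<dots> = dotp V m4 (?F1 \<cdot> d) ((tau \<otimes> etaB) \<cdot> idm I)" by (rule dot_pre) (rule tyr2 eBB | simp)+
    also have "(tau \<otimes> etaB) \<cdot> idm I = tau \<otimes> etaB" using id_right[OF arr_tar[OF tau_arr mB(3)]] by simp
    also have "?F1 \<cdot> d = dotp V m4 (?F1 \<cdot> (etaA \<otimes> dl)) ?X" by (rule hom_dot'[OF H_dl1 M3 M4]) (rule tyr2 eBB | simp)+
    also have "?F1 \<cdot> (etaA \<otimes> dl) = etaA \<otimes> ((dl \<otimes> idm B) \<cdot> dl)"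
    proof -
      have "?F1 = idm A \<otimes> (dl \<otimes> idm B)" by (rule tar_assoc) (rule tyr2 eBB | simp)+
      hence "?F1 \<cdot> (etaA \<otimes> dl) = (idm A \<otimes> (dl \<otimes> idm B)) \<cdot> (etaA \<otimes> dl)" by simp
      also have "\<dots> = (idm A \<cdot> etaA) \<otimes> ((dl \<otimes> idm B) \<cdot> dl)" by (rule interchange[symmetric]) (rule tyr2 eBB | simp)+
      also have "idm A \<cdot> etaA = etaA" by (rule id_left) (rule tyr2 eBB | simp)+
      finally show ?thesis .
    qed
    also have "dotp V m4 (dotp V m4 (etaA \<otimes> ((dl \<otimes> idm B) \<cdot> dl)) ?X) (tau \<otimes> etaB) = 
       dotp V m4 (etaA \<otimes> ((dl \<otimes> idm B) \<cdot> dl)) (dotp V m4 ?X (tau \<otimes> etaB))"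
      by (rule dot_assoc[OF M4]) (rule tyr2 eBB | simp)+
    finally show ?thesis .
  qed
  have R: "(muA \<otimes> idm (B \<boxtimes> B \<boxtimes> B)) \<cdot> (((idm A \<otimes> z) \<otimes> idm (B \<boxtimes> B)) \<cdot> (((idm A \<otimes> idm B) \<otimes> d) \<cdot> d)) =
      dotp V m4 (etaA \<otimes> ((idm B \<otimes> dl) \<cdot> dl)) (dotp V m4 ?Y ?T)"
  proof -
    have "muA \<otimes> idm (B \<boxtimes> B \<boxtimes> B) = muA \<otimes> (idm B \<otimes> idm (B \<boxtimes> B))" using tar_id[of B "B \<boxtimes> B"] by simp
    also have "\<dots> = (muA \<otimes> idm B) \<otimes> idm (B \<boxtimes> B)" by (rule tar_assoc[symmetric]) (rule tyr2 eBB | simp)+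
    finally have "(muA \<otimes> idm (B \<boxtimes> B \<boxtimes> B)) \<cdot> ((idm A \<otimes> z) \<otimes> idm (B \<boxtimes> B)) = ((muA \<otimes> idm B) \<otimes> idm (B \<boxtimes> B)) \<cdot> ((idm A \<otimes> z) \<otimes> idm (B \<boxtimes> B))" by simp
    also have "\<dots> = ((muA \<otimes> idm B) \<cdot> (idm A \<otimes> z)) \<otimes> (idm (B \<boxtimes> B) \<cdot> idm (B \<boxtimes> B))" by (rule interchange[symmetric]) (rule tyr2 eBB | simp)+
    also have "idm (B \<boxtimes> B) \<cdot> idm (B \<boxtimes> B) = idm (B \<boxtimes> B)" by (rule id_left) (rule tyr2 eBB | simp)+
    also note Qlem
    also have "dotp V mAB (idm (A \<boxtimes> B)) gam \<otimes> idm (B \<boxtimes> B) = dotp V m4 (idm (A \<boxtimes> B) \<otimes> (etaB \<otimes> etaB)) (gam \<otimes> idm (B \<boxtimes> B))"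
    proof -
      have "dotp V m4' (idm (A \<boxtimes> B) \<otimes> (etaB \<otimes> etaB)) (gam \<otimes> idm (B \<boxtimes> B)) = dotp V mAB (idm (A \<boxtimes> B)) gam \<otimes> dotp V mBB (etaB \<otimes> etaB) (idm (B \<boxtimes> B))"
        by (rule tm_dot[OF MAB MBB idAB eBB gam_arr idBB]) (simp add: br_IX)
      thus ?thesis using dot_uL[OF MBB idBB] s4 by simp
    qed
    finally have S1: "(muA \<otimes> idm (B \<boxtimes> B \<boxtimes> B)) \<cdot> ((idm A \<otimes> z) \<otimes> idm (B \<boxtimes> B)) = dotp V m4 (idm (A \<boxtimes> B) \<otimes> (etaB \<otimes> etaB)) (gam \<otimes> idm (B \<boxtimes> B))" .
    let ?k = "idm (A \<boxtimes> B) \<otimes> (etaB \<otimes> etaB)"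
    have S2: "((muA \<otimes> idm (B \<boxtimes> B \<boxtimes> B)) \<cdot> ((idm A \<otimes> z) \<otimes> idm (B \<boxtimes> B))) \<cdot> ((idm A \<otimes> idm B) \<otimes> d) = dotp V m4 (idm (A \<boxtimes> B) \<otimes> dl) ?T"
    proof -
      have "((muA \<otimes> idm (B \<boxtimes> B \<boxtimes> B)) \<cdot> ((idm A \<otimes> z) \<otimes> idm (B \<boxtimes> B))) \<cdot> ((idm A \<otimes> idm B) \<otimes> d) = 
          dotp V m4 ?k (gam \<otimes> idm (B \<boxtimes> B)) \<cdot> (idm (A \<boxtimes> B) \<otimes> d)" using S1 tar_id by simp
      also have "\<dots> = dotp V m4 (?k \<cdot> idm (A \<boxtimes> B)) ((gam \<otimes> idm (B \<boxtimes> B)) \<cdot> d)" by (rule dot_pre) (rule tyr2 eBB idAB | simp)+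
      also have "?k \<cdot> idm (A \<boxtimes> B) = ?k" using id_right[OF arr_tar[OF idAB eBB]] by simp
      also have "(gam \<otimes> idm (B \<boxtimes> B)) \<cdot> d = dotp V m4' ((gam \<otimes> idm (B \<boxtimes> B)) \<cdot> (etaA \<otimes> dl)) ?T"
      proof -
        have "(gam \<otimes> idm (B \<boxtimes> B)) \<cdot> dotp V m3' (etaA \<otimes> dl) tau = dotp V m4' ((gam \<otimes> idm (B \<boxtimes> B)) \<cdot> (etaA \<otimes> dl)) ?T"
          by (rule hom_dot'[OF H_gam2 M3' M4']) (rule tyr2 eBB | simp)+
        thus ?thesis using s3 by simp
      qed
      also have "(gam \<otimes> idm (B \<boxtimes> B)) \<cdot> (etaA \<otimes> dl) = (gam \<cdot> etaA) \<otimes> (idm (B \<boxtimes> B) \<cdot> dl)" by (rule interchange[symmetric]) (rule tyr2 eBB | simp)+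
      also have "gam \<cdot> etaA = etaA \<otimes> etaB" by (rule homD(3)[OF gam_hom])
      also have "idm (B \<boxtimes> B) \<cdot> dl = dl" by (rule id_left) (rule tyr2 eBB | simp)+
      also have "dotp V m4 ?k (dotp V m4' ((etaA \<otimes> etaB) \<otimes> dl) ?T) = dotp V m4 (dotp V m4 ?k ((etaA \<otimes> etaB) \<otimes> dl)) ?T"
        unfolding s4[symmetric] by (rule dot_assoc[OF M4, symmetric]) (rule tyr2 eBB idAB eAB | simp)+
      also have "dotp V m4 ?k ((etaA \<otimes> etaB) \<otimes> dl) = idm (A \<boxtimes> B) \<otimes> dl"
      proof -
        have "dotp V m4' ?k ((etaA \<otimes> etaB) \<otimes> dl) = dotp V mAB (idm (A \<boxtimes> B)) (etaA \<otimes> etaB) \<otimes> dotp V mBB (etaB \<otimes> etaB) dl"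
          by (rule tm_dot[OF MAB MBB idAB eBB eAB dl_arr]) (simp add: br_IX)
        thus ?thesis using dot_uR[OF MAB idAB] dot_uL[OF MBB dl_arr] s4 by simp
      qed
      finally show ?thesis .
    qed
    have "(muA \<otimes> idm (B \<boxtimes> B \<boxtimes> B)) \<cdot> (((idm A \<otimes> z) \<otimes> idm (B \<boxtimes> B)) \<cdot> (((idm A \<otimes> idm B) \<otimes> d) \<cdot> d)) =
       ((muA \<otimes> idm (B \<boxtimes> B \<boxtimes> B)) \<cdot> ((idm A \<otimes> z) \<otimes> idm (B \<boxtimes> B))) \<cdot> (((idm A \<otimes> idm B) \<otimes> d) \<cdot> d)" by (rule cmp_assoc) (rule tyr2 eBB | simp)+
    also have "\<dots> = (((muA \<otimes> idm (B \<boxtimes> B \<boxtimes> B)) \<cdot> ((idm A \<otimes> z) \<otimes> idm (B \<boxtimes> B))) \<cdot> ((idm A \<otimes> idm B) \<otimes> d)) \<cdot> (d \<otimes> idm I)"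
      using tar_IR[OF d_arr] by (subst cmp_assoc) (rule tyr2 eBB | simp)+
    also note S2
    also have "dotp V m4 (idm (A \<boxtimes> B) \<otimes> dl) ?T \<cdot> (d \<otimes> idm I) = dotp V m4 ((idm (A \<boxtimes> B) \<otimes> dl) \<cdot> d) (?T \<cdot> idm I)"
      by (rule dot_pre) (rule tyr2 idAB | simp)+
    also have "?T \<cdot> idm I = ?T" by (rule id_right) (rule tyr2 eBB | simp)+
    also have "(idm (A \<boxtimes> B) \<otimes> dl) \<cdot> d = dotp V m4 ((idm (A \<boxtimes> B) \<otimes> dl) \<cdot> (etaA \<otimes> dl)) ?Y"
      by (rule hom_dot'[OF H_dl2 M3 M4]) (rule tyr2 idAB | simp)+
    also have "(idm (A \<boxtimes> B) \<otimes> dl) \<cdot> (etaA \<otimes> dl) = etaA \<otimes> ((idm B \<otimes> dl) \<cdot> dl)"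
    proof -
      have "idm (A \<boxtimes> B) \<otimes> dl = (idm A \<otimes> idm B) \<otimes> dl" using tar_id by simp
      also have "\<dots> = idm A \<otimes> (idm B \<otimes> dl)" by (rule tar_assoc) (rule tyr2 eBB | simp)+
      finally have "(idm (A \<boxtimes> B) \<otimes> dl) \<cdot> (etaA \<otimes> dl) = (idm A \<otimes> (idm B \<otimes> dl)) \<cdot> (etaA \<otimes> dl)" by simp
      also have "\<dots> = (idm A \<cdot> etaA) \<otimes> ((idm B \<otimes> dl) \<cdot> dl)" by (rule interchange[symmetric]) (rule tyr2 eBB | simp)+
      also have "idm A \<cdot> etaA = etaA" by (rule id_left) (rule tyr2 eBB | simp)+
      finally show ?thesis .
    qed
    also have "dotp V m4 (dotp V m4 (etaA \<otimes> ((idm B \<otimes> dl) \<cdot> dl)) ?Y) ?T = dotp V m4 (etaA \<otimes> ((idm B \<otimes> dl) \<cdot> dl)) (dotp V m4 ?Y ?T)"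
      by (rule dot_assoc[OF M4]) (rule tyr2 idAB | simp)+
    finally show ?thesis .
  qed
  show ?thesis using L R cocycle dl_coassoc by simp
qed

end

context prob begin
lemma final: "mixed_opwreath V A muA etaA B d w z"
  unfolding mixed_opwreath_def Let_def
  using ax1 ax2 ax3 ax4 ax5 ax6 ax7 d_arr z_arr w_arr unfolding arr_def by simp
end

theorem proposition4p2:
  fixes V :: "('o, 'm) bmcat"
    and A B :: 'o
    and muA etaA muB etaB dl ep gam tau :: 'm
  assumes "braided_moncat V"
    and "is_monoid V A muA etaA"
    and "is_bimonoid V B muB etaB dl ep"
    and "twisted_coaction V A muA etaA B muB etaB dl ep gam tau"
  shows "mixed_opwreath V A muA etaA B
           (dotp V (tmult V (tob V A B) (tmult V A muA B muB) B muB)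
                 (tar V etaA dl) tau)
           (cmp V etaA ep)
           (dotp V (tmult V A muA B muB) (tar V etaA (ident V B)) gam)"
proof -
  interpret prob V A B muA etaA muB etaB dl ep gam tau
    using assms by (unfold_locales) auto
  show ?thesis by (rule final)
qed

end
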